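(* Assume $m$ satisfies (H1) with index $n\in\mathbb{N}^\star$ and (H2a), and let $K$ be as in the context. Then there is $C>0$ such that $$|\nabla^lK(x)|\le C|x|^{-(l+1)}\big(m(|x|^{-1})+1\big)\quad\text{for all }x\in\mathbb{R}^2\setminus\{0\},\ l\in\{0,1,\dots,n+1\}.$$
   Context: $m:(0,\infty)\to\mathbb{R}$. (H1) with index $n$: $m\in C^{n+4}(\mathbb{R}_+)$; $m>0$, $m'\ge0$ on $(0,\infty)$; $\lim_{r\to0^+}rm'(r)$ exists; $|\frac{\mathrm d^k}{\mathrm dr^k}m'(r)|\le Cr^{-k}m'(r)$ for $k=1,\dots,n+3$, $r>0$. (H2a): with $\widetilde m(r)=m(e^r)$, there exist $\beta\in[0,+\infty]$, $\beta_1\in[0,\infty)$, $\beta_2\in(-2,\infty)$ with $\lim_{r\to\infty}m(r)=\infty$, $\lim\frac{r(\log r)\widetilde m'(r)}{\widetilde m(r)}=\beta$, $\lim\frac{r\widetilde m'(r)}{\widetilde m(r)}=\beta_1$, $\lim\frac{r\widetilde m''(r)}{\widetilde m'(r)}=\beta_2$ (as $r\to\infty$). $m(0^+)=\lim_{r\to0^+}m(r)$; $G(\rho)=\frac{1}{2\pi}m(0^+)+\frac{1}{2\pi}\int_0^\infty J_0(\rho r)m'(r)\,\mathrm dr$ with $J_0$ the zero-order Bessel function; $K(x)=\frac{x^\perp}{|x|^2}G(|x|)$ with $x^\perp=(x_2,-x_1)$. *)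

theory Defs
  imports "HOL-Analysis.Analysis"
begin

definition bessel_J0 :: "real \<Rightarrow> real" where
  "bessel_J0 x = (\<Sum>k. (-1) ^ k / (fact k)^2 * (x / 2) ^ (2 * k))"

definition H1 :: "nat \<Rightarrow> (real \<Rightarrow> real) \<Rightarrow> bool" where
  "H1 n m \<longleftrightarrow>
     (\<forall>k < n + 4. \<forall>r > 0. ((deriv ^^ k) m has_real_derivative (deriv ^^ Suc k) m r) (at r)) \<and>
     continuous_on {0<..} ((deriv ^^ (n + 4)) m) \<and>
     (\<forall>r > 0. m r > 0 \<and> deriv m r \<ge> 0) \<and>
     (\<exists>L. ((\<lambda>r. r * deriv m r) \<longlongrightarrow> L) (at_right 0)) \<and>
     (\<exists>C. \<forall>k \<in> {1..n+3}. \<forall>r > 0.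
        \<bar>(deriv ^^ k) (deriv m) r\<bar> \<le> C * r powr (- real k) * deriv m r)"

definition H2a :: "(real \<Rightarrow> real) \<Rightarrow> bool" where
  "H2a m \<longleftrightarrow>
     (let mt = (\<lambda>s. m (exp s)) in
      filterlim m at_top at_top \<and>
      (\<exists>\<beta>::ereal. \<beta> \<ge> 0 \<and>
         ((\<lambda>r. ereal (r * ln r * deriv mt r / mt r)) \<longlongrightarrow> \<beta>) at_top) \<and>
      (\<exists>\<beta>1::real. \<beta>1 \<ge> 0 \<and> ((\<lambda>r. r * deriv mt r / mt r) \<longlongrightarrow> \<beta>1) at_top) \<and>
      (\<exists>\<beta>2::real. \<beta>2 > -2 \<and>
         ((\<lambda>r. r * deriv (deriv mt) r / deriv mt r) \<longlongrightarrow> \<beta>2) at_top))"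

definition m0plus :: "(real \<Rightarrow> real) \<Rightarrow> real" where
  "m0plus m = Lim (at_right 0) m"

definition Gfun :: "(real \<Rightarrow> real) \<Rightarrow> real \<Rightarrow> real" where
  "Gfun m \<rho> = m0plus m / (2 * pi)
      + (1 / (2 * pi)) * integral {0<..} (\<lambda>r. bessel_J0 (\<rho> * r) * deriv m r)"

definition perp :: "real^2 \<Rightarrow> real^2" where
  "perp x = (\<chi> i. if i = 1 then x $ 2 else - (x $ 1))"

definition Kker :: "(real \<Rightarrow> real) \<Rightarrow> real^2 \<Rightarrow> real^2" where
  "Kker m x = (Gfun m (norm x) / (norm x)^2) *\<^sub>R perp x"

fun pd :: "2 list \<Rightarrow> (real^2 \<Rightarrow> real^2) \<Rightarrow> real^2 \<Rightarrow> real^2" where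
  "pd [] F = F"
| "pd (i # is) F = (\<lambda>x. frechet_derivative (pd is F) (at x) (axis i 1))"

end

theory Submission
  imports Defs
begin

definition c0 :: "nat \<Rightarrow> real" where "c0 k = (-1)^k / (fact k)^2"
definition c1 :: "nat \<Rightarrow> real" where "c1 k = (-1)^k / (fact k * fact (Suc k))"
definition F0 :: "real \<Rightarrow> real" where "F0 y = (\<Sum>k. c0 k * y^k)"
definition F1 :: "real \<Rightarrow> real" where "F1 y = (\<Sum>k. c1 k * y^k)"
definition d1 :: "nat \<Rightarrow> real" where "d1 k = (if k = 0 then 0 else c1 (k - 1))"

lemma summable_by_exp:
  assumes "\<And>k. \<bar>c k\<bar> \<le> 1 / fact k"
  shows "summable (\<lambda>k. c k * (y::real)^k)"
proof (rule summable_comparison_test[OF _ summable_exp[of "\<bar>y\<bar>"]])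
  show "\<exists>N. \<forall>n\<ge>N. norm (c n * y ^ n) \<le> inverse (fact n) * \<bar>y\<bar> ^ n"
    using assms by (auto simp: abs_mult power_abs divide_inverse intro!: mult_right_mono)
qed

lemma fact_sq_ge: "(fact k :: real) \<le> (fact k)^2"
  by (simp add: power2_eq_square)

lemma c0_bound: "\<bar>c0 k\<bar> \<le> 1 / fact k"
proof -
  have "\<bar>c0 k\<bar> = 1 / (fact k)^2" by (simp add: c0_def abs_div power_abs)
  also have "\<dots> \<le> 1 / fact k" by (intro divide_left_mono fact_sq_ge) auto
  finally show ?thesis .
qed

lemma c1_bound: "\<bar>c1 k\<bar> \<le> 1 / fact k"
proof -
  have "\<bar>c1 k\<bar> = 1 / (fact k * fact (Suc k))" by (simp add: c1_def abs_div power_abs)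
  also have "\<dots> \<le> 1 / fact k"
  proof (intro divide_left_mono)
    show "fact k \<le> (fact k * fact (Suc k) :: real)"
      using fact_ge_1[of "Suc k", where 'a=real] fact_gt_zero[of k, where 'a=real]
      by (simp only: mult_le_cancel_left1) auto
  qed auto
  finally show ?thesis .
qed

lemma d1_bound: "\<bar>d1 k\<bar> \<le> 1 / fact k"
proof (cases k)
  case (Suc j)
  have "\<bar>d1 k\<bar> = 1 / (fact j * fact (Suc j))" using Suc by (simp add: d1_def c1_def abs_div power_abs)
  also have "\<dots> = 1 / fact k * (1 / fact j)" using Suc by (simp add: field_simps)
  also have "\<dots> \<le> 1 / fact k" by (auto simp: fact_ge_1 divide_le_eq)
  finally show ?thesis .
qed (simp add: d1_def)

lemma sum_c0: "summable (\<lambda>k. c0 k * (y::real)^k)" by (rule summable_by_exp[OF c0_bound])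
lemma sum_c1: "summable (\<lambda>k. c1 k * (y::real)^k)" by (rule summable_by_exp[OF c1_bound])
lemma sum_d1: "summable (\<lambda>k. d1 k * (y::real)^k)" by (rule summable_by_exp[OF d1_bound])

lemma diffs_c0: "diffs c0 = (\<lambda>k. - c1 k)"
proof
  fix k
  have "diffs c0 k = real (Suc k) * ((-1)^Suc k / (fact (Suc k))^2)" by (simp add: diffs_def c0_def)
  also have "\<dots> = - c1 k" unfolding c1_def
    by (simp add: power2_eq_square field_simps del: of_nat_Suc)
  finally show "diffs c0 k = - c1 k" .
qed

lemma diffs_d1: "diffs d1 = c0"
proof
  fix k
  show "diffs d1 k = c0 k"
    by (simp add: diffs_def d1_def c1_def c0_def power2_eq_square field_simps del: of_nat_Suc)
qed

lemma F0_deriv: "(F0 has_real_derivative - F1 y) (at y)"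
proof -
  have "((\<lambda>x. \<Sum>n. c0 n * x^n) has_field_derivative (\<Sum>n. diffs c0 n * y^n)) (at y)"
    by (rule termdiffs_strong_converges_everywhere) (rule sum_c0)
  moreover have "(\<Sum>n. diffs c0 n * y^n) = - F1 y"
    unfolding diffs_c0 F1_def using suminf_minus[OF sum_c1[of y]] by simp
  ultimately show ?thesis unfolding F0_def by simp
qed

lemma d1_eq: "(\<Sum>n. d1 n * y^n) = y * F1 y"
proof -
  have "(\<lambda>n. d1 (Suc n) * y^Suc n) sums (y * F1 y)"
    unfolding F1_def using sums_mult[OF summable_sums[OF sum_c1[of y]], of y]
    by (simp add: d1_def mult_ac)
  hence "(\<lambda>n. d1 n * y^n) sums (y * F1 y + d1 0 * y^0)"
    using sums_Suc_iff[of "\<lambda>n. d1 n * y^n"] by simp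
  hence "(\<lambda>n. d1 n * y^n) sums (y * F1 y)" by (simp add: d1_def)
  thus ?thesis by (simp add: sums_iff)
qed

lemma yF1_deriv: "((\<lambda>y. y * F1 y) has_real_derivative F0 y) (at y)"
proof -
  have "((\<lambda>x. \<Sum>n. d1 n * x^n) has_field_derivative (\<Sum>n. diffs d1 n * y^n)) (at y)"
    by (rule termdiffs_strong_converges_everywhere) (rule sum_d1)
  thus ?thesis unfolding diffs_d1 d1_eq F0_def by simp
qed

lemma F1_deriv_ex: "\<exists>D. (F1 has_real_derivative D) (at y)"
  using termdiffs_strong_converges_everywhere[OF sum_c1] unfolding F1_def by blast

definition J1 :: "real \<Rightarrow> real" where "J1 x = x / 2 * F1 (x^2/4)"

lemma J0_F0: "bessel_J0 x = F0 (x^2/4)"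
  unfolding bessel_J0_def F0_def c0_def
  by (simp add: power_mult power_divide)

lemma J0_deriv: "(bessel_J0 has_real_derivative - J1 x) (at x)"
proof -
  have "((\<lambda>x. F0 (x^2/4)) has_real_derivative (- F1 (x^2/4)) * (2 * x / 4)) (at x)"
    by (rule DERIV_chain2[OF F0_deriv]) (auto intro!: derivative_eq_intros)
  thus ?thesis unfolding J0_F0[abs_def] J1_def by (simp add: field_simps)
qed

lemma xJ1_deriv: "((\<lambda>x. x * J1 x) has_real_derivative x * bessel_J0 x) (at x)"
proof -
  have e: "(\<lambda>x. x * J1 x) = (\<lambda>x. 2 * ((\<lambda>y. y * F1 y) (x^2/4)))"
    by (auto simp: J1_def power2_eq_square)
  have "((\<lambda>x. (\<lambda>y. y * F1 y) (x^2/4)) has_real_derivative F0 (x^2/4) * (2 * x / 4)) (at x)"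
    by (rule DERIV_chain2[OF yF1_deriv]) (auto intro!: derivative_eq_intros)
  hence "((\<lambda>x. 2 * ((\<lambda>y. y * F1 y) (x^2/4))) has_real_derivative 2 * (F0 (x^2/4) * (2 * x / 4))) (at x)"
    by (rule DERIV_cmult)
  thus ?thesis unfolding e J0_F0 by (simp add: field_simps)
qed

lemma J1_deriv_ex: "\<exists>D. (J1 has_real_derivative D) (at x)"
proof -
  obtain D where "(F1 has_real_derivative D) (at (x^2/4))" using F1_deriv_ex by blast
  hence "((\<lambda>x. F1 (x^2/4)) has_real_derivative D * (2*x/4)) (at x)"
    by (rule DERIV_chain2) (auto intro!: derivative_eq_intros)
  hence "((\<lambda>x. x / 2 * F1 (x^2/4)) has_real_derivative (1/2 * F1 (x^2/4) + x/2 * (D * (2*x/4)))) (at x)"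
    by (auto intro!: derivative_eq_intros)
  thus ?thesis unfolding J1_def[abs_def] by blast
qed

lemma J1_deriv: assumes "x \<noteq> 0" shows "(J1 has_real_derivative bessel_J0 x - J1 x / x) (at x)"
proof -
  obtain D where D: "(J1 has_real_derivative D) (at x)" using J1_deriv_ex by blast
  have "((\<lambda>x. x * J1 x) has_real_derivative 1 * J1 x + x * D) (at x)"
    using D by (auto intro!: derivative_eq_intros)
  with xJ1_deriv have "1 * J1 x + x * D = x * bessel_J0 x" using DERIV_unique by blast
  hence "D = bessel_J0 x - J1 x / x" using assms by (simp add: field_simps)
  with D show ?thesis by simp
qed

lemma J0_0: "bessel_J0 0 = 1"
  unfolding J0_F0 F0_def using powser_zero[of c0] by (simp add: c0_def)

lemma J1_0: "J1 0 = 0" by (simp add: J1_def)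

lemma J0_cont: "isCont bessel_J0 x" using J0_deriv DERIV_isCont by blast
lemma J1_cont: "isCont J1 x" using J1_deriv_ex DERIV_isCont by blast

lemma J_energy_deriv:
  assumes "x > 0"
  shows "((\<lambda>x. (bessel_J0 x)^2 + (J1 x)^2) has_real_derivative - 2 * (J1 x)^2 / x) (at x)"
proof -
  have "((\<lambda>x. (bessel_J0 x)^2 + (J1 x)^2) has_real_derivative
     2 * bessel_J0 x * (- J1 x) + 2 * J1 x * (bessel_J0 x - J1 x / x)) (at x)"
    using J0_deriv[of x] J1_deriv[of x] assms
    by (auto intro!: derivative_eq_intros simp: power2_eq_square)
  thus ?thesis using assms by (simp add: field_simps power2_eq_square)
qed

lemma J_energy_le: assumes "x \<ge> 0" shows "(bessel_J0 x)^2 + (J1 x)^2 \<le> 1"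
proof -
  let ?E = "\<lambda>x. (bessel_J0 x)^2 + (J1 x)^2"
  have "?E x \<le> ?E 0"
  proof (rule DERIV_nonpos_imp_nonincreasing[OF assms])
    fix t assume t0: "0 \<le> t" and t1: "t \<le> x"
    have t: "0 \<le> t \<and> t \<le> x" using t0 t1 by simp
    show "\<exists>y. DERIV ?E t :> y \<and> y \<le> 0"
    proof (cases "t = 0")
      case True
      obtain D where D: "(J1 has_real_derivative D) (at 0)" using J1_deriv_ex by blast
      have "DERIV ?E 0 :> 2 * bessel_J0 0 * (- J1 0) + 2 * J1 0 * D"
        using J0_deriv[of 0] D by (auto intro!: derivative_eq_intros simp: power2_eq_square)
      thus ?thesis using True by (auto simp: J1_0)
    next
      case False
      hence "t > 0" using t by auto
      thus ?thesis using J_energy_deriv[of t] by (intro exI[of _ "- 2 * (J1 t)^2 / t"]) auto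
    qed
  qed
  thus ?thesis by (simp add: J0_0 J1_0)
qed

lemma J0_le1: assumes "x \<ge> 0" shows "\<bar>bessel_J0 x\<bar> \<le> 1"
proof -
  have "(bessel_J0 x)^2 \<le> 1" using J_energy_le[OF assms] zero_le_power2[of "J1 x"] by linarith
  thus ?thesis using abs_le_square_iff[of "bessel_J0 x" 1] by simp
qed

lemma J1_le1: assumes "x \<ge> 0" shows "\<bar>J1 x\<bar> \<le> 1"
proof -
  have "(J1 x)^2 \<le> 1" using J_energy_le[OF assms] zero_le_power2[of "bessel_J0 x"] by linarith
  thus ?thesis using abs_le_square_iff[of "J1 x" 1] by simp
qed

lemma amgm: "\<bar>a * b\<bar> \<le> (a^2 + b^2) / (2::real)"
proof -
  have "0 \<le> (\<bar>a\<bar> - \<bar>b\<bar>)^2" by simp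
  also have "(\<bar>a\<bar> - \<bar>b\<bar>)^2 = a^2 + b^2 - 2 * \<bar>a * b\<bar>"
    by (simp add: power2_eq_square algebra_simps abs_mult)
  finally show ?thesis by simp
qed

definition HH :: "real \<Rightarrow> real" where
  "HH x = x * ((bessel_J0 x)^2 + (J1 x)^2) + (bessel_J0 x)^2 / (2 * x) - bessel_J0 x * J1 x"

lemma HH_deriv: assumes "x > 0" shows "(HH has_real_derivative - ((bessel_J0 x)^2 / (2 * x^2))) (at x)"
  unfolding HH_def[abs_def]
  apply (rule DERIV_cong)
   apply (use J0_deriv[of x] J1_deriv[of x] assms in \<open>auto intro!: derivative_eq_intros\<close>)[1]
  using assms apply (simp add: field_simps power2_eq_square)
  done

lemma J_energy_decay: assumes "x \<ge> 1" shows "(bessel_J0 x)^2 + (J1 x)^2 \<le> 4 / x"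
proof -
  have "HH x \<le> HH 1"
  proof (rule DERIV_nonpos_imp_nonincreasing[OF assms])
    fix t assume t0: "1 \<le> t" and t1: "t \<le> x"
    hence t: "1 \<le> t \<and> t \<le> x" by simp
    thus "\<exists>y. DERIV HH t :> y \<and> y \<le> 0"
      using HH_deriv[of t] by (intro exI[of _ "- ((bessel_J0 t)^2 / (2 * t^2))"]) auto
  qed
  moreover have "HH 1 \<le> 2"
  proof -
    have e: "(bessel_J0 1)^2 + (J1 1)^2 \<le> 1" by (rule J_energy_le) simp
    have "\<bar>bessel_J0 1 * J1 1\<bar> \<le> ((bessel_J0 1)^2 + (J1 1)^2) / 2" by (rule amgm)
    with e have "- (bessel_J0 1 * J1 1) \<le> 1/2" using abs_ge_minus_self[of "bessel_J0 1 * J1 1"] by argo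
    moreover have "(bessel_J0 1)^2 / 2 \<le> 1/2" using e zero_le_power2[of "J1 1"] by argo
    ultimately show ?thesis unfolding HH_def using e by simp
  qed
  moreover have "(x - 1/2) * ((bessel_J0 x)^2 + (J1 x)^2) \<le> HH x"
  proof -
    have "\<bar>bessel_J0 x * J1 x\<bar> \<le> ((bessel_J0 x)^2 + (J1 x)^2) / 2" by (rule amgm)
    moreover have "(bessel_J0 x)^2 / (2 * x) \<ge> 0" using assms by simp
    ultimately show ?thesis unfolding HH_def by (simp add: algebra_simps)
  qed
  ultimately have "(x - 1/2) * ((bessel_J0 x)^2 + (J1 x)^2) \<le> 2" by linarith
  moreover have "x / 2 * ((bessel_J0 x)^2 + (J1 x)^2) \<le> (x - 1/2) * ((bessel_J0 x)^2 + (J1 x)^2)"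
    using assms by (intro mult_right_mono) auto
  ultimately have "x * ((bessel_J0 x)^2 + (J1 x)^2) \<le> 4" by linarith
  thus ?thesis using assms by (simp add: field_simps)
qed

definition Jd :: "real \<Rightarrow> real" where "Jd x = min 1 (1 / sqrt x)"

lemma sq_le_bound: assumes "a^2 \<le> b" "b \<ge> 0" shows "\<bar>a::real\<bar> \<le> sqrt b"
  using assms real_sqrt_le_mono[OF assms(1)] by simp

lemma J0_Jd: assumes "x > 0" shows "\<bar>bessel_J0 x\<bar> \<le> 2 * Jd x"
proof (cases "x \<ge> 1")
  case True
  have "(bessel_J0 x)^2 \<le> 4 / x" using J_energy_decay[OF True] zero_le_power2[of "J1 x"] by linarith
  hence "\<bar>bessel_J0 x\<bar> \<le> sqrt (4 / x)" using True by (intro sq_le_bound) auto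
  also have "sqrt (4 / x) = 2 / sqrt x" by (simp add: real_sqrt_divide)
  also have "2 / sqrt x = 2 * Jd x" using True by (simp add: Jd_def min_def)
  finally show ?thesis .
next
  case False
  thus ?thesis using J0_le1[of x] assms by (simp add: Jd_def min_def)
qed

lemma J1_Jd: assumes "x > 0" shows "\<bar>J1 x\<bar> \<le> 2 * Jd x"
proof (cases "x \<ge> 1")
  case True
  have "(J1 x)^2 \<le> 4 / x" using J_energy_decay[OF True] zero_le_power2[of "bessel_J0 x"] by linarith
  hence "\<bar>J1 x\<bar> \<le> sqrt (4 / x)" using True by (intro sq_le_bound) auto
  also have "sqrt (4 / x) = 2 / sqrt x" by (simp add: real_sqrt_divide)
  also have "2 / sqrt x = 2 * Jd x" using True by (simp add: Jd_def min_def)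
  finally show ?thesis .
next
  case False
  thus ?thesis using J1_le1[of x] assms by (simp add: Jd_def min_def)
qed

lemma Jd_pos: "x > 0 \<Longrightarrow> Jd x > 0" by (simp add: Jd_def)
lemma Jd_le1: "Jd x \<le> 1" by (simp add: Jd_def)
lemma Jd_antimono: assumes "0 < x" "x \<le> y" shows "Jd y \<le> Jd x"
proof -
  have "1 / sqrt y \<le> 1 / sqrt x" using assms by (intro divide_left_mono) auto
  thus ?thesis unfolding Jd_def by linarith
qed
lemma Jd_cont: "x > 0 \<Longrightarrow> isCont Jd x"
  unfolding Jd_def[abs_def] by (auto intro!: continuous_intros)

lemma sbm_cont: "S \<in> sets borel \<Longrightarrow> continuous_on S f \<Longrightarrow> set_borel_measurable lborel S (f::real\<Rightarrow>real)"
  unfolding set_borel_measurable_def using borel_measurable_continuous_on_indicator[of S f] by simp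

lemma si_bound:
  fixes f g :: "real \<Rightarrow> real"
  assumes "set_integrable lborel S g" "S \<in> sets borel" "continuous_on S f" "\<And>x. x \<in> S \<Longrightarrow> \<bar>f x\<bar> \<le> g x"
  shows "set_integrable lborel S f"
proof (rule set_integrable_bound[OF assms(1) sbm_cont[OF assms(2,3)]])
  show "AE x in lborel. x \<in> S \<longrightarrow> norm (f x) \<le> norm (g x)"
    using assms(4) by (auto intro!: AE_I2 simp: abs_le_iff) (smt (verit) assms(4))+
qed

lemma si_diff2:
  fixes f :: "real \<Rightarrow> real"
  assumes "(A - B) \<union> (B - A) \<subseteq> {a, b}"
  shows "set_integrable lborel A f \<longleftrightarrow> set_integrable lborel B f"
    and "(LINT x:A|lborel. f x) = (LINT x:B|lborel. f x)"
  by (rule set_integrable_discrete_difference[where X="{a,b}"], use assms in auto)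
     (rule set_integral_discrete_difference[where X="{a,b}"], use assms in auto)

lemma ftc_Ioi:
  fixes f F :: "real \<Rightarrow> real"
  assumes "\<And>x. x > a \<Longrightarrow> (F has_real_derivative f x) (at x)"
    and "\<And>x. x > a \<Longrightarrow> isCont f x"
    and "set_integrable lborel {a<..} f"
    and "(F \<longlongrightarrow> FA) (at_right a)" and "(F \<longlongrightarrow> FB) at_top"
  shows "(LINT x:{a<..}|lborel. f x) = FB - FA"
proof -
  have "(LBINT x=ereal a..\<infinity>. f x) = FB - FA"
    by (rule interval_integral_FTC_integrable)
       (use assms in \<open>auto simp: ereal_tendsto_simps1 has_real_derivative_iff_has_vector_derivative[symmetric]\<close>)
  thus ?thesis by (simp add: interval_integral_to_infinity_eq)
qed

lemma ftc_Ioo_nonneg: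
  fixes f F :: "real \<Rightarrow> real"
  assumes "a < b"
    and "\<And>x. a < x \<Longrightarrow> x < b \<Longrightarrow> (F has_real_derivative f x) (at x)"
    and "\<And>x. a < x \<Longrightarrow> x < b \<Longrightarrow> isCont f x"
    and "\<And>x. a < x \<Longrightarrow> x < b \<Longrightarrow> f x \<ge> 0"
    and "(F \<longlongrightarrow> FA) (at_right a)" and "(F \<longlongrightarrow> FB) (at_left b)"
  shows "set_integrable lborel {a<..<b} f" "(LINT x:{a<..<b}|lborel. f x) = FB - FA"
proof -
  have *: "set_integrable lborel (einterval (ereal a) (ereal b)) f \<and> (LBINT x=ereal a..ereal b. f x) = FB - FA"
    by (intro conjI interval_integral_FTC_nonneg)
       (use assms in \<open>auto simp: ereal_tendsto_simps1 intro!: AE_I2\<close>)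
  thus "set_integrable lborel {a<..<b} f" by simp
  show "(LINT x:{a<..<b}|lborel. f x) = FB - FA"
    using * assms(1) by (simp add: interval_integral_Ioo)
qed

lemma ftc_Ioi_nonneg:
  fixes f F :: "real \<Rightarrow> real"
  assumes "\<And>x. a < x \<Longrightarrow> (F has_real_derivative f x) (at x)"
    and "\<And>x. a < x \<Longrightarrow> isCont f x"
    and "\<And>x. a < x \<Longrightarrow> f x \<ge> 0"
    and "(F \<longlongrightarrow> FA) (at_right a)" and "(F \<longlongrightarrow> FB) at_top"
  shows "set_integrable lborel {a<..} f" "(LINT x:{a<..}|lborel. f x) = FB - FA"
proof -
  have *: "set_integrable lborel (einterval (ereal a) \<infinity>) f \<and> (LBINT x=ereal a..\<infinity>. f x) = FB - FA"
    by (intro conjI interval_integral_FTC_nonneg)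
       (use assms in \<open>auto simp: ereal_tendsto_simps1 intro!: AE_I2\<close>)
  thus "set_integrable lborel {a<..} f" by simp
  show "(LINT x:{a<..}|lborel. f x) = FB - FA"
    using * by (simp add: interval_integral_to_infinity_eq)
qed

lemma powr_int_Ioi:
  fixes R c :: real
  assumes "R > 0" "c > 1"
  shows "set_integrable lborel {R<..} (\<lambda>r. r powr (-c))"
    "(LINT r:{R<..}|lborel. r powr (-c)) = R powr (1 - c) / (c - 1)"
proof -
  let ?F = "\<lambda>r. - (r powr (1 - c) / (c - 1))"
  have d: "(?F has_real_derivative r powr (-c)) (at r)" if "R < r" for r
  proof -
    have "r > 0" using that assms by linarith
    hence "(?F has_real_derivative - ((1 - c) * r powr (1 - c - 1) / (c - 1))) (at r)"
      using assms by (auto intro!: derivative_eq_intros)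
    moreover have "- ((1 - c) * r powr (1 - c - 1) / (c - 1)) = r powr (-c)" using assms by (simp add: field_simps)
    ultimately show ?thesis by simp
  qed
  have l1: "(?F \<longlongrightarrow> ?F R) (at_right R)"
    using assms by (intro tendsto_intros) (auto intro!: tendsto_intros simp: tendsto_mono[OF at_le])
  have "((\<lambda>r. r powr (1 - c)) \<longlongrightarrow> 0) at_top" using assms by (intro tendsto_neg_powr filterlim_ident) auto
  note l0 = tendsto_minus[OF tendsto_divide_zero[OF this, of "c-1"]]
  have l2: "(?F \<longlongrightarrow> 0) at_top" using l0 by simp
  have c: "isCont (\<lambda>r. r powr (-c)) r" if "R < r" for r using that assms by (auto intro!: continuous_intros)
  show "set_integrable lborel {R<..} (\<lambda>r. r powr (-c))"
    by (rule ftc_Ioi_nonneg(1)[OF d c _ l1 l2]) auto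
  have "(LINT r:{R<..}|lborel. r powr (-c)) = 0 - ?F R"
    by (rule ftc_Ioi_nonneg(2)[OF d c _ l1 l2]) auto
  thus "(LINT r:{R<..}|lborel. r powr (-c)) = R powr (1 - c) / (c - 1)" by simp
qed

locale kset =
  fixes m \<phi> :: "real \<Rightarrow> real" and m0 A B :: real
  assumes m_deriv: "\<And>r. r > 0 \<Longrightarrow> (m has_real_derivative \<phi> r) (at r)"
    and phi_cont: "continuous_on {0<..} \<phi>"
    and phi_nn: "\<And>r. r > 0 \<Longrightarrow> \<phi> r \<ge> 0"
    and m_pos: "\<And>r. r > 0 \<Longrightarrow> m r > 0"
    and m_lim: "(m \<longlongrightarrow> m0) (at_right 0)"
    and rphi_lim: "((\<lambda>r. r * \<phi> r) \<longlongrightarrow> 0) (at_right 0)"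
    and A_bd: "\<And>r. r > 0 \<Longrightarrow> r * \<phi> r \<le> A * (m r + 1)"
    and B_bd: "\<And>R r. 0 < R \<Longrightarrow> R \<le> r \<Longrightarrow> m r + 1 \<le> B * (m R + 1) * (r / R) powr (1/4)"
begin

lemma m_cont: "r > 0 \<Longrightarrow> isCont m r" using m_deriv DERIV_isCont by blast

lemma phi_isCont: "r > 0 \<Longrightarrow> isCont \<phi> r"
  using phi_cont continuous_on_eq_continuous_at[of "{0<..}" \<phi>] by auto

lemma m_mono: assumes "0 < a" "a \<le> b" shows "m a \<le> m b"
proof (rule DERIV_nonneg_imp_nondecreasing[OF assms(2)])
  fix x assume "a \<le> x" "x \<le> b"
  hence x: "x > 0" using assms by linarith
  show "\<exists>y. DERIV m x :> y \<and> 0 \<le> y" using m_deriv[OF x] phi_nn[OF x] by blast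
qed

lemma m0_le: assumes "r > 0" shows "m0 \<le> m r"
proof (rule tendsto_upperbound[OF m_lim])
  show "\<forall>\<^sub>F i in at_right 0. m i \<le> m r"
    by (rule eventually_at_rightI[of 0 r]) (use assms m_mono in auto)
qed auto

lemma m0_nn: "0 \<le> m0"
proof (rule tendsto_lowerbound[OF m_lim])
  show "\<forall>\<^sub>F i in at_right 0. 0 \<le> m i"
    by (rule eventually_at_rightI[of 0 1]) (use m_pos less_imp_le in auto)
qed auto

lemma A_nn: "A \<ge> 0"
proof -
  have "0 \<le> 1 * \<phi> 1" using phi_nn[of 1] by simp
  also have "\<dots> \<le> A * (m 1 + 1)" using A_bd[of 1] by simp
  finally show ?thesis using m_pos[of 1] by (simp add: zero_le_mult_iff)
qed

lemma B_ge1: "B \<ge> 1"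
proof -
  have "m 1 + 1 \<le> B * (m 1 + 1)" using B_bd[of 1 1] by simp
  thus ?thesis using m_pos[of 1] by simp
qed

lemma phi_head:
  assumes "R > 0"
  shows "set_integrable lborel {0<..<R} \<phi>" "(LINT r:{0<..<R}|lborel. \<phi> r) = m R - m0"
proof -
  have lR: "(m \<longlongrightarrow> m R) (at_left R)" using m_cont[OF assms] by (simp add: isCont_def filterlim_at_split)
  show "set_integrable lborel {0<..<R} \<phi>"
    by (rule ftc_Ioo_nonneg(1)[OF assms _ _ _ m_lim lR]) (auto intro: m_deriv phi_isCont phi_nn)
  show "(LINT r:{0<..<R}|lborel. \<phi> r) = m R - m0"
    by (rule ftc_Ioo_nonneg(2)[OF assms _ _ _ m_lim lR]) (auto intro: m_deriv phi_isCont phi_nn)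
qed

lemma phi_head':
  assumes "R > 0"
  shows "set_integrable lborel {0<..R} \<phi>" "(LINT r:{0<..R}|lborel. \<phi> r) = m R - m0"
proof -
  have d: "({0<..R} - {0<..<R}) \<union> ({0<..<R} - {0<..R}) \<subseteq> {0, R}" by auto
  show "set_integrable lborel {0<..R} \<phi>" using phi_head(1)[OF assms] si_diff2(1)[OF d] by simp
  show "(LINT r:{0<..R}|lborel. \<phi> r) = m R - m0" using phi_head(2)[OF assms] si_diff2(2)[OF d] by simp
qed

lemma tail_bd:
  assumes "0 < R" "R \<le> r"
  shows "\<phi> r * Jd (r / R) \<le> A * B * (m R + 1) * R powr (1/4) * r powr (-5/4)"
proof -
  have r: "r > 0" using assms by linarith
  have "Jd (r / R) \<le> 1 / sqrt (r / R)" by (simp add: Jd_def)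
  also have "1 / sqrt (r / R) = (r / R) powr (-1/2)"
    using assms r by (simp add: powr_minus_divide powr_half_sqrt[symmetric])
  finally have j: "Jd (r / R) \<le> (r / R) powr (-1/2)" .
  have p: "\<phi> r \<le> A * (m r + 1) / r" using A_bd[OF r] r by (simp add: field_simps)
  also have "\<dots> \<le> A * (B * (m R + 1) * (r / R) powr (1/4)) / r"
    using B_bd[OF assms] A_nn r by (intro divide_right_mono mult_left_mono) auto
  finally have p2: "\<phi> r \<le> A * (B * (m R + 1) * (r / R) powr (1/4)) / r" .
  have "\<phi> r * Jd (r / R) \<le> A * (B * (m R + 1) * (r / R) powr (1/4)) / r * (r / R) powr (-1/2)"
    using p2 j phi_nn[OF r] Jd_pos[of "r/R"] r assms
    by (intro mult_mono) auto
  also have "\<dots> = A * B * (m R + 1) * ((r / R) powr (1/4) * (r / R) powr (-1/2) / r)" by simp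
  also have "(r / R) powr (1/4) * (r / R) powr (-1/2) / r = R powr (1/4) * r powr (-5/4)"
  proof -
    have "(r / R) powr (1/4) * (r / R) powr (-1/2) = (r / R) powr (-1/4)" by (simp add: powr_add[symmetric])
    also have "\<dots> = r powr (-1/4) * R powr (1/4)" using assms r by (simp add: powr_divide powr_minus field_simps)
    finally have "(r / R) powr (1/4) * (r / R) powr (-1/2) / r = r powr (-1/4) / r * R powr (1/4)" by simp
    also have "r powr (-1/4) / r = r powr (-5/4)"
    proof -
      have "r powr (-1/4) = r powr (1 + (-5/4))" by simp
      also have "\<dots> = r powr 1 * r powr (-5/4)" by (rule powr_add)
      finally show ?thesis using r by simp
    qed
    finally show ?thesis by simp
  qed
  finally show ?thesis by simp
qed

definition Dm :: "real \<Rightarrow> real \<Rightarrow> real" where "Dm R r = \<phi> r * Jd (r / R)"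

lemma Dm_cont: "R > 0 \<Longrightarrow> continuous_on {0<..} (Dm R)"
  unfolding Dm_def
  by (intro continuous_on_mult phi_cont continuous_at_imp_continuous_on ballI)
     (auto intro!: continuous_intros isCont_o2[OF _ Jd_cont] simp: )

lemma Dm_nn: "R > 0 \<Longrightarrow> r > 0 \<Longrightarrow> Dm R r \<ge> 0"
  unfolding Dm_def using phi_nn Jd_pos by (simp add: less_imp_le)

lemma Dm_int:
  assumes "R > 0"
  shows "set_integrable lborel {0<..} (Dm R)"
    "(LINT r:{0<..}|lborel. Dm R r) \<le> (1 + 4 * A * B) * (m R + 1)"
    "set_integrable lborel {R<..} (Dm R)"
    "(LINT r:{R<..}|lborel. Dm R r) \<le> 4 * A * B * (m R + 1)"
proof -
  have h: "set_integrable lborel {0<..R} (Dm R)"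
    by (rule si_bound[OF phi_head'(1)[OF assms] _ continuous_on_subset[OF Dm_cont[OF assms]]])
       (use assms in \<open>auto intro: continuous_on_subset simp: Dm_def abs_mult Jd_le1 phi_nn
            Jd_pos less_imp_le intro!: mult_left_le\<close>)
  have hb: "(LINT r:{0<..R}|lborel. Dm R r) \<le> m R - m0"
  proof -
    have "(LINT r:{0<..R}|lborel. Dm R r) \<le> (LINT r:{0<..R}|lborel. \<phi> r)"
      by (rule set_integral_mono[OF h phi_head'(1)[OF assms]])
         (use assms in \<open>auto simp: Dm_def Jd_le1 phi_nn intro!: mult_left_le\<close>)
    thus ?thesis using phi_head'(2)[OF assms] by simp
  qed
  let ?K = "A * B * (m R + 1) * R powr (1/4)"
  have pi: "set_integrable lborel {R<..} (\<lambda>r. r powr (-(5/4)))"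
    using powr_int_Ioi(1)[OF assms, of "5/4"] by simp
  have ti: "set_integrable lborel {R<..} (Dm R)"
    by (rule si_bound[OF set_integrable_mult_right[OF pi, of ?K] _ continuous_on_subset[OF Dm_cont[OF assms]]])
       (use assms tail_bd Dm_nn in \<open>auto intro: continuous_on_subset simp: Dm_def\<close>)
  have tb: "(LINT r:{R<..}|lborel. Dm R r) \<le> 4 * A * B * (m R + 1)"
  proof -
    have "(LINT r:{R<..}|lborel. Dm R r) \<le> (LINT r:{R<..}|lborel. ?K * r powr (-(5/4)))"
      by (rule set_integral_mono[OF ti set_integrable_mult_right[OF pi]])
         (use assms tail_bd in \<open>auto simp: Dm_def\<close>)
    also have "\<dots> = ?K * (R powr (1 - 5/4) / (5/4 - 1))"
      using powr_int_Ioi(2)[OF assms, of "5/4"] by simp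
    also have "\<dots> = 4 * A * B * (m R + 1) * (R powr (1/4) * R powr (-1/4))" by simp
    also have "R powr (1/4) * R powr (-1/4) = 1" using assms by (simp add: powr_add[symmetric])
    finally show ?thesis by simp
  qed
  show "set_integrable lborel {R<..} (Dm R)" by (fact ti)
  show "(LINT r:{R<..}|lborel. Dm R r) \<le> 4 * A * B * (m R + 1)" by (fact tb)
  have u: "{0<..} = {0<..R} \<union> {R<..}" using assms by auto
  show "set_integrable lborel {0<..} (Dm R)"
    unfolding u by (rule set_integrable_Un[OF h ti]) auto
  have "(LINT r:{0<..}|lborel. Dm R r) = (LINT r:{0<..R}|lborel. Dm R r) + (LINT r:{R<..}|lborel. Dm R r)"
    unfolding u by (rule set_integral_Un[OF _ h ti]) auto
  also have "\<dots> \<le> (m R - m0) + 4 * A * B * (m R + 1)" using hb tb by linarith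
  also have "\<dots> \<le> (1 + 4 * A * B) * (m R + 1)" using m0_nn by (simp add: algebra_simps)
  finally show "(LINT r:{0<..}|lborel. Dm R r) \<le> (1 + 4 * A * B) * (m R + 1)" .
qed

end

fun Psi :: "(real \<Rightarrow> real) \<Rightarrow> nat \<Rightarrow> (real \<Rightarrow> real) \<Rightarrow> bool" where
  "Psi \<phi> 0 \<psi> = (continuous_on {0<..} \<psi> \<and> (\<exists>C. \<forall>r>0. \<bar>\<psi> r\<bar> \<le> C * \<phi> r))"
| "Psi \<phi> (Suc k) \<psi> = (Psi \<phi> 0 \<psi> \<and> (\<exists>\<psi>'. (\<forall>r>0. (\<psi> has_real_derivative \<psi>' r) (at r)) \<and> Psi \<phi> k (\<lambda>r. r * \<psi>' r)))"

lemma Psi_mono: "Psi \<phi> (Suc k) \<psi> \<Longrightarrow> Psi \<phi> k \<psi>"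
proof (induction k arbitrary: \<psi>)
  case 0 thus ?case by simp
next
  case (Suc k)
  then obtain \<psi>' where "\<forall>r>0. (\<psi> has_real_derivative \<psi>' r) (at r)" "Psi \<phi> (Suc k) (\<lambda>r. r * \<psi>' r)"
    "Psi \<phi> 0 \<psi>" by auto
  with Suc.IH show ?case by auto
qed

lemma Psi0_add: "Psi \<phi> 0 \<psi>1 \<Longrightarrow> Psi \<phi> 0 \<psi>2 \<Longrightarrow> Psi \<phi> 0 (\<lambda>r. \<psi>1 r + \<psi>2 r)"
proof -
  assume a: "Psi \<phi> 0 \<psi>1" "Psi \<phi> 0 \<psi>2"
  then obtain C1 C2 where "\<forall>r>0. \<bar>\<psi>1 r\<bar> \<le> C1 * \<phi> r" "\<forall>r>0. \<bar>\<psi>2 r\<bar> \<le> C2 * \<phi> r"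
    "continuous_on {0<..} \<psi>1" "continuous_on {0<..} \<psi>2" using a by auto
  hence "\<forall>r>0. \<bar>\<psi>1 r + \<psi>2 r\<bar> \<le> (C1 + C2) * \<phi> r"
  proof (intro allI impI)
    fix r :: real assume "r > 0" "\<forall>r>0. \<bar>\<psi>1 r\<bar> \<le> C1 * \<phi> r" "\<forall>r>0. \<bar>\<psi>2 r\<bar> \<le> C2 * \<phi> r"
    hence "\<bar>\<psi>1 r\<bar> \<le> C1 * \<phi> r" "\<bar>\<psi>2 r\<bar> \<le> C2 * \<phi> r" by auto
    thus "\<bar>\<psi>1 r + \<psi>2 r\<bar> \<le> (C1 + C2) * \<phi> r"
      using abs_triangle_ineq[of "\<psi>1 r" "\<psi>2 r"] by (simp add: distrib_right)
  qed
  thus ?thesis using a by (auto intro!: continuous_intros)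
qed

lemma Psi_add: "Psi \<phi> k \<psi>1 \<Longrightarrow> Psi \<phi> k \<psi>2 \<Longrightarrow> Psi \<phi> k (\<lambda>r. \<psi>1 r + \<psi>2 r)"
proof (induction k arbitrary: \<psi>1 \<psi>2)
  case 0
  then obtain C1 C2 where "\<forall>r>0. \<bar>\<psi>1 r\<bar> \<le> C1 * \<phi> r" "\<forall>r>0. \<bar>\<psi>2 r\<bar> \<le> C2 * \<phi> r"
    "continuous_on {0<..} \<psi>1" "continuous_on {0<..} \<psi>2" by auto
  hence "\<forall>r>0. \<bar>\<psi>1 r + \<psi>2 r\<bar> \<le> (C1 + C2) * \<phi> r"
  proof (intro allI impI)
    fix r :: real assume "r > 0" "\<forall>r>0. \<bar>\<psi>1 r\<bar> \<le> C1 * \<phi> r" "\<forall>r>0. \<bar>\<psi>2 r\<bar> \<le> C2 * \<phi> r"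
    hence "\<bar>\<psi>1 r\<bar> \<le> C1 * \<phi> r" "\<bar>\<psi>2 r\<bar> \<le> C2 * \<phi> r" by auto
    thus "\<bar>\<psi>1 r + \<psi>2 r\<bar> \<le> (C1 + C2) * \<phi> r"
      using abs_triangle_ineq[of "\<psi>1 r" "\<psi>2 r"] by (simp add: distrib_right)
  qed
  thus ?case using 0 by (auto intro!: continuous_intros)
next
  case (Suc k)
  then obtain d1 d2 where d: "\<forall>r>0. (\<psi>1 has_real_derivative d1 r) (at r)" "Psi \<phi> k (\<lambda>r. r * d1 r)"
    "\<forall>r>0. (\<psi>2 has_real_derivative d2 r) (at r)" "Psi \<phi> k (\<lambda>r. r * d2 r)" by auto
  have "Psi \<phi> 0 \<psi>1" "Psi \<phi> 0 \<psi>2" using Suc.prems by auto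
  hence "Psi \<phi> 0 (\<lambda>r. \<psi>1 r + \<psi>2 r)" by (rule Psi0_add)
  moreover have "Psi \<phi> k (\<lambda>r. r * (d1 r + d2 r))"
    using Suc.IH[OF d(2) d(4)] by (simp add: distrib_left)
  moreover have "\<forall>r>0. ((\<lambda>r. \<psi>1 r + \<psi>2 r) has_real_derivative d1 r + d2 r) (at r)"
    using d by (auto intro!: derivative_eq_intros)
  ultimately show ?case by auto
qed


lemma Psi_cmult: "Psi \<phi> k \<psi> \<Longrightarrow> Psi \<phi> k (\<lambda>r. c * \<psi> r)"
proof (induction k arbitrary: \<psi>)
  case 0
  then obtain C where "\<forall>r>0. \<bar>\<psi> r\<bar> \<le> C * \<phi> r" "continuous_on {0<..} \<psi>" by auto
  hence "\<forall>r>0. \<bar>c * \<psi> r\<bar> \<le> (\<bar>c\<bar> * C) * \<phi> r"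
    by (auto simp: abs_mult mult.assoc intro!: mult_left_mono)
  thus ?case using 0 by (auto intro!: continuous_intros)
next
  case (Suc k)
  then obtain d where d: "\<forall>r>0. (\<psi> has_real_derivative d r) (at r)" "Psi \<phi> k (\<lambda>r. r * d r)" "Psi \<phi> 0 \<psi>" by auto
  have "Psi \<phi> 0 (\<lambda>r. c * \<psi> r)"
  proof -
    from d(3) obtain C where "\<forall>r>0. \<bar>\<psi> r\<bar> \<le> C * \<phi> r" "continuous_on {0<..} \<psi>" by auto
    hence "\<forall>r>0. \<bar>c * \<psi> r\<bar> \<le> (\<bar>c\<bar> * C) * \<phi> r"
      by (auto simp: abs_mult mult.assoc intro!: mult_left_mono)
    thus ?thesis using d(3) by (auto intro!: continuous_intros)
  qed
  moreover have "Psi \<phi> k (\<lambda>r. r * (c * d r))" using Suc.IH[OF d(2)] by (simp add: mult_ac)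
  moreover have "\<forall>r>0. ((\<lambda>r. c * \<psi> r) has_real_derivative c * d r) (at r)"
    using d by (auto intro!: derivative_eq_intros)
  ultimately show ?case by auto
qed

context kset begin

lemma phi_to0: "(\<phi> \<longlongrightarrow> 0) at_top"
proof (rule Lim_null_comparison)
  let ?K = "A * B * (m 1 + 1)"
  show "\<forall>\<^sub>F r in at_top. norm (\<phi> r) \<le> ?K * (r powr (1/4) / r)"
  proof (rule eventually_at_top_linorderI[of 1])
    fix r :: real assume r: "1 \<le> r"
    have "\<phi> r \<le> A * (m r + 1) / r" using A_bd[of r] r by (simp add: field_simps)
    also have "\<dots> \<le> A * (B * (m 1 + 1) * (r / 1) powr (1/4)) / r"
      using B_bd[of 1 r] r A_nn by (intro divide_right_mono mult_left_mono) auto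
    finally show "norm (\<phi> r) \<le> ?K * (r powr (1/4) / r)" using phi_nn[of r] r by simp
  qed
  have lim: "((\<lambda>r::real. r powr (-(3/4))) \<longlongrightarrow> 0) at_top" by (intro tendsto_neg_powr filterlim_ident) auto
  have ev: "\<forall>\<^sub>F r in at_top. r powr (-(3/4)) = r powr (1/4) / (r::real)"
  proof (rule eventually_at_top_linorderI[of 1])
    fix r :: real assume "1 \<le> r"
    hence r: "r > 0" by simp
    have "r powr (1/4) = r powr (1 + (-(3/4)))" by simp
    also have "\<dots> = r powr 1 * r powr (-(3/4))" by (rule powr_add)
    also have "\<dots> = r * r powr (-(3/4))" using r by simp
    finally show "r powr (-(3/4)) = r powr (1/4) / r" using r by simp
  qed
  have "((\<lambda>r::real. r powr (1/4) / r) \<longlongrightarrow> 0) at_top" using tendsto_cong[OF ev] lim by blast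
  thus "((\<lambda>r. ?K * (r powr (1/4) / r)) \<longlongrightarrow> 0) at_top" using tendsto_mult_right_zero by blast
qed

lemma Psi0_bound: assumes "Psi \<phi> 0 \<psi>" obtains C where "C \<ge> 0" "\<And>r. r > 0 \<Longrightarrow> \<bar>\<psi> r\<bar> \<le> C * \<phi> r"
proof -
  from assms obtain C where C: "\<forall>r>0. \<bar>\<psi> r\<bar> \<le> C * \<phi> r" by auto
  have "\<bar>\<psi> r\<bar> \<le> max C 0 * \<phi> r" if r: "r > 0" for r
  proof -
    have "\<bar>\<psi> r\<bar> \<le> C * \<phi> r" using C r by auto
    also have "\<dots> \<le> max C 0 * \<phi> r" using phi_nn[OF r] by (intro mult_right_mono) auto
    finally show ?thesis .
  qed
  thus ?thesis using that[of "max C 0"] by auto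
qed

lemma Psi_to0: assumes "Psi \<phi> 0 \<psi>" shows "(\<psi> \<longlongrightarrow> 0) at_top"
proof -
  obtain C where C: "C \<ge> 0" "\<And>r. r > 0 \<Longrightarrow> \<bar>\<psi> r\<bar> \<le> C * \<phi> r" using Psi0_bound[OF assms] by blast
  show ?thesis
  proof (rule Lim_null_comparison)
    show "\<forall>\<^sub>F r in at_top. norm (\<psi> r) \<le> C * \<phi> r"
      by (rule eventually_at_top_linorderI[of 1]) (use C in auto)
    show "((\<lambda>r. C * \<phi> r) \<longlongrightarrow> 0) at_top" using tendsto_mult_right_zero[OF phi_to0] by blast
  qed
qed

lemma Psi_rto0: assumes "Psi \<phi> 0 \<psi>" shows "((\<lambda>r. r * \<psi> r) \<longlongrightarrow> 0) (at_right 0)"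
proof -
  obtain C where C: "C \<ge> 0" "\<And>r. r > 0 \<Longrightarrow> \<bar>\<psi> r\<bar> \<le> C * \<phi> r" using Psi0_bound[OF assms] by blast
  show ?thesis
  proof (rule Lim_null_comparison)
    show "\<forall>\<^sub>F r in at_right 0. norm (r * \<psi> r) \<le> C * (r * \<phi> r)"
    proof (rule eventually_at_rightI[of 0 1])
      fix r :: real assume "r \<in> {0<..<1}"
      hence r: "r > 0" by simp
      have "norm (r * \<psi> r) = r * \<bar>\<psi> r\<bar>" using r by (simp add: abs_mult)
      also have "\<dots> \<le> r * (C * \<phi> r)" using C(2)[OF r] r by (intro mult_left_mono) auto
      finally show "norm (r * \<psi> r) \<le> C * (r * \<phi> r)" by (simp add: mult_ac)
    qed simp
    show "((\<lambda>r. C * (r * \<phi> r)) \<longlongrightarrow> 0) (at_right 0)" using tendsto_mult_right_zero[OF rphi_lim] by blast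
  qed
qed

definition Iop :: "(real \<Rightarrow> real) \<Rightarrow> real \<Rightarrow> real" where
  "Iop \<psi> \<rho> = (LINT r:{0<..}|lborel. bessel_J0 (\<rho> * r) * \<psi> r)"

lemma Dm_inv: "Dm (1 / \<rho>) r = \<phi> r * Jd (\<rho> * r)" by (simp add: Dm_def mult.commute)

lemma J0psi_int:
  assumes "Psi \<phi> 0 \<psi>" "\<rho> > 0"
  shows "set_integrable lborel {0<..} (\<lambda>r. bessel_J0 (\<rho> * r) * \<psi> r)"
proof -
  obtain C where C: "C \<ge> 0" "\<And>r. r > 0 \<Longrightarrow> \<bar>\<psi> r\<bar> \<le> C * \<phi> r" using Psi0_bound[OF assms(1)] by blast
  have ct: "continuous_on {0<..} \<psi>" using assms(1) by simp
  have "1 / \<rho> > 0" using assms by simp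
  note DI = set_integrable_mult_right[OF Dm_int(1)[OF this], of "2 * C"]
  show ?thesis
  proof (rule si_bound[OF DI])
    show "continuous_on {0<..} (\<lambda>r. bessel_J0 (\<rho> * r) * \<psi> r)"
      by (intro continuous_on_mult ct continuous_at_imp_continuous_on ballI)
         (auto intro!: isCont_o2[OF _ J0_cont] continuous_intros)
    fix r :: real assume r: "r \<in> {0<..}"
    have "\<bar>bessel_J0 (\<rho> * r) * \<psi> r\<bar> \<le> (2 * Jd (\<rho> * r)) * (C * \<phi> r)"
      unfolding abs_mult using r assms J0_Jd[of "\<rho> * r"] C Jd_pos[of "\<rho>*r"]
      by (intro mult_mono) auto
    thus "\<bar>bessel_J0 (\<rho> * r) * \<psi> r\<bar> \<le> 2 * C * Dm (1 / \<rho>) r" unfolding Dm_inv by (simp add: mult_ac)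
  qed simp
qed

end

context kset begin

lemma Ibound:
  assumes "Psi \<phi> (Suc 0) \<psi>"
  shows "\<exists>K. \<forall>\<rho>>0. \<bar>Iop \<psi> \<rho>\<bar> \<le> K * (m (1 / \<rho>) + 1)"
proof -
  have P0: "Psi \<phi> 0 \<psi>" using assms by simp
  obtain C where C: "C \<ge> 0" "\<And>r. r > 0 \<Longrightarrow> \<bar>\<psi> r\<bar> \<le> C * \<phi> r" using Psi0_bound[OF P0] by blast
  obtain \<psi>' where d: "\<And>r. r > 0 \<Longrightarrow> (\<psi> has_real_derivative \<psi>' r) (at r)" and P1: "Psi \<phi> 0 (\<lambda>r. r * \<psi>' r)"
    using assms by auto
  obtain C' where C': "C' \<ge> 0" "\<And>r. r > 0 \<Longrightarrow> \<bar>r * \<psi>' r\<bar> \<le> C' * \<phi> r" using Psi0_bound[OF P1] by blast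
  have ct: "continuous_on {0<..} \<psi>" using P0 by simp
  have ct': "continuous_on {0<..} (\<lambda>r. r * \<psi>' r)" using P1 by simp
  define K where "K = C + C * A + 2 * (C + C') * (1 + 4 * A * B)"
  have "\<bar>Iop \<psi> \<rho>\<bar> \<le> K * (m (1 / \<rho>) + 1)" if \<rho>: "\<rho> > 0" for \<rho>
  proof -
    define R where "R = 1 / \<rho>"
    have R: "R > 0" using \<rho> by (simp add: R_def)
    define f where "f r = bessel_J0 (\<rho> * r) * \<psi> r" for r
    define g where "g r = J1 (\<rho> * r) * (r * \<psi>' r - \<psi> r) / (\<rho> * r)" for r
    define F where "F r = J1 (\<rho> * r) * \<psi> r / \<rho>" for r
    have fi: "set_integrable lborel {0<..} f" unfolding f_def by (rule J0psi_int[OF P0 \<rho>])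
    have fiH: "set_integrable lborel {0<..R} f" by (rule set_integrable_subset[OF fi]) auto
    have fiT: "set_integrable lborel {R<..} f" by (rule set_integrable_subset[OF fi]) (use R in auto)
    have split: "Iop \<psi> \<rho> = (LINT r:{0<..R}|lborel. f r) + (LINT r:{R<..}|lborel. f r)"
    proof -
      have u: "{0<..} = {0<..R} \<union> {R<..}" using R by auto
      show ?thesis unfolding Iop_def f_def[symmetric] u by (rule set_integral_Un[OF _ fiH fiT]) auto
    qed
    have head: "\<bar>LINT r:{0<..R}|lborel. f r\<bar> \<le> C * (m R - m0)"
    proof -
      have "\<bar>LINT r:{0<..R}|lborel. f r\<bar> \<le> (LINT r:{0<..R}|lborel. \<bar>f r\<bar>)"
        using set_integral_norm_bound[OF fiH] by simp
      also have "\<dots> \<le> (LINT r:{0<..R}|lborel. C * \<phi> r)"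
      proof (rule set_integral_mono[OF set_integrable_abs[OF fiH] set_integrable_mult_right[OF phi_head'(1)[OF R]]])
        fix r :: real assume "r \<in> {0<..R}"
        hence r: "r > 0" by simp
        have "\<bar>f r\<bar> \<le> 1 * \<bar>\<psi> r\<bar>" unfolding f_def abs_mult using J0_le1[of "\<rho> * r"] r \<rho>
          by (intro mult_right_mono) auto
        thus "\<bar>f r\<bar> \<le> C * \<phi> r" using C(2)[OF r] by simp
      qed
      also have "\<dots> = C * (m R - m0)" using phi_head'(2)[OF R] by simp
      finally show ?thesis .
    qed
    have gbd: "\<bar>g r\<bar> \<le> 2 * (C + C') * Dm R r" if r: "r > R" for r
    proof -
      have r0: "r > 0" using r R by linarith
      have rr: "\<rho> * r > 1" using r \<rho> by (simp add: R_def field_simps)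
      have "\<bar>g r\<bar> = \<bar>J1 (\<rho> * r)\<bar> * \<bar>r * \<psi>' r - \<psi> r\<bar> / (\<rho> * r)"
        unfolding g_def using r0 \<rho> by (simp add: abs_mult abs_div)
      also have "\<dots> \<le> \<bar>J1 (\<rho> * r)\<bar> * \<bar>r * \<psi>' r - \<psi> r\<bar>"
        using divide_left_mono[of 1 "\<rho> * r" "\<bar>J1 (\<rho> * r)\<bar> * \<bar>r * \<psi>' r - \<psi> r\<bar>"] rr by simp
      also have "\<dots> \<le> (2 * Jd (\<rho> * r)) * ((C + C') * \<phi> r)"
      proof (intro mult_mono)
        show "\<bar>J1 (\<rho> * r)\<bar> \<le> 2 * Jd (\<rho> * r)" using J1_Jd[of "\<rho> * r"] rr by simp
        have "\<bar>r * \<psi>' r - \<psi> r\<bar> \<le> \<bar>r * \<psi>' r\<bar> + \<bar>\<psi> r\<bar>" by (rule abs_triangle_ineq4)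
        also have "\<dots> \<le> C' * \<phi> r + C * \<phi> r" using C(2)[OF r0] C'(2)[OF r0] by linarith
        finally show "\<bar>r * \<psi>' r - \<psi> r\<bar> \<le> (C + C') * \<phi> r" by (simp add: algebra_simps)
        show "0 \<le> 2 * Jd (\<rho> * r)" using Jd_pos[of "\<rho> * r"] rr by simp
      qed simp
      also have "\<dots> = 2 * (C + C') * Dm R r" by (simp add: Dm_def R_def mult_ac)
      finally show ?thesis .
    qed
    have gcont: "continuous_on {R<..} g"
    proof -
      have "continuous_on {R<..} (\<lambda>r. J1 (\<rho> * r) * ((r * \<psi>' r) - \<psi> r) / (\<rho> * r))"
        using R \<rho>
        by (intro continuous_intros continuous_on_subset[OF ct'] continuous_on_subset[OF ct]
              continuous_at_imp_continuous_on ballI isCont_o2[OF _ J1_cont]) auto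
      thus ?thesis unfolding g_def .
    qed
    have gi: "set_integrable lborel {R<..} g"
      by (rule si_bound[OF set_integrable_mult_right[OF Dm_int(3)[OF R], of "2 * (C + C')"] _ gcont])
         (use gbd in auto)
    have Fd: "(F has_real_derivative f r + g r) (at r)" if r: "r > R" for r
    proof -
      have r0: "r > 0" using r R by linarith
      have "(F has_real_derivative ((bessel_J0 (\<rho> * r) - J1 (\<rho> * r) / (\<rho> * r)) * \<rho> * \<psi> r + J1 (\<rho> * r) * \<psi>' r) / \<rho>) (at r)"
        unfolding F_def[abs_def]
        by (rule derivative_eq_intros DERIV_chain2[OF J1_deriv] d[OF r0] | (use r0 \<rho> in simp))+
      moreover have "((bessel_J0 (\<rho> * r) - J1 (\<rho> * r) / (\<rho> * r)) * \<rho> * \<psi> r + J1 (\<rho> * r) * \<psi>' r) / \<rho> = f r + g r"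
        unfolding f_def g_def using r0 \<rho> by (simp add: field_simps)
      ultimately show ?thesis by simp
    qed
    have fgc: "isCont (\<lambda>r. f r + g r) r" if r: "r > R" for r
    proof -
      have r0: "r > 0" using r R by linarith
      have "isCont \<psi> r" using ct r0 continuous_on_eq_continuous_at[of "{0<..}" \<psi>] by auto
      moreover have "isCont g r" using gcont r continuous_on_eq_continuous_at[of "{R<..}" g] by auto
      ultimately show ?thesis unfolding f_def by (auto intro!: continuous_intros isCont_o2[OF _ J0_cont])
    qed
    have FR: "(F \<longlongrightarrow> F R) (at_right R)"
    proof -
      have "isCont \<psi> R" using ct R continuous_on_eq_continuous_at[of "{0<..}" \<psi>] by auto
      hence "isCont F R" unfolding F_def[abs_def] using \<rho> by (auto intro!: continuous_intros isCont_o2[OF _ J1_cont])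
      thus ?thesis by (simp add: isCont_def filterlim_at_split)
    qed
    have F0: "(F \<longlongrightarrow> 0) at_top"
    proof (rule Lim_null_comparison)
      show "\<forall>\<^sub>F r in at_top. norm (F r) \<le> \<bar>\<psi> r\<bar> / \<rho>"
      proof (rule eventually_at_top_linorderI[of 1])
        fix r :: real assume "1 \<le> r"
        have "\<bar>J1 (\<rho> * r)\<bar> \<le> 1" using J1_le1[of "\<rho> * r"] \<open>1 \<le> r\<close> \<rho> by simp
        hence "\<bar>J1 (\<rho> * r)\<bar> * \<bar>\<psi> r\<bar> \<le> \<bar>\<psi> r\<bar>" using mult_right_mono[of _ 1 "\<bar>\<psi> r\<bar>"] by simp
        thus "norm (F r) \<le> \<bar>\<psi> r\<bar> / \<rho>" unfolding F_def using \<rho> by (simp add: abs_mult abs_div divide_right_mono)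
      qed
      have "((\<lambda>r. \<bar>\<psi> r\<bar>) \<longlongrightarrow> 0) at_top" using tendsto_rabs_zero[OF Psi_to0[OF P0]] .
      thus "((\<lambda>r. \<bar>\<psi> r\<bar> / \<rho>) \<longlongrightarrow> 0) at_top" using tendsto_divide_zero by blast
    qed
    have fgi: "set_integrable lborel {R<..} (\<lambda>r. f r + g r)" using fiT gi by (rule set_integral_add)
    have "(LINT r:{R<..}|lborel. f r + g r) = 0 - F R"
      by (rule ftc_Ioi[OF Fd fgc fgi FR F0])
    hence tail_eq: "(LINT r:{R<..}|lborel. f r) = - F R - (LINT r:{R<..}|lborel. g r)"
      using set_integral_add(2)[OF fiT gi] by simp
    have "\<bar>F R\<bar> \<le> C * A * (m R + 1)"
    proof -
      have "\<bar>F R\<bar> = \<bar>J1 1\<bar> * \<bar>\<psi> R\<bar> * R" unfolding F_def using \<rho> by (simp add: R_def abs_mult abs_div)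
      also have "\<dots> \<le> 1 * (C * \<phi> R) * R" using J1_le1[of 1] C(2)[OF R] R
        by (intro mult_right_mono mult_mono) auto
      also have "\<dots> = C * (R * \<phi> R)" by simp
      also have "\<dots> \<le> C * (A * (m R + 1))" using A_bd[OF R] C(1) by (rule mult_left_mono)
      finally show ?thesis by simp
    qed
    moreover have "\<bar>LINT r:{R<..}|lborel. g r\<bar> \<le> 2 * (C + C') * (4 * A * B * (m R + 1))"
    proof -
      have "\<bar>LINT r:{R<..}|lborel. g r\<bar> \<le> (LINT r:{R<..}|lborel. \<bar>g r\<bar>)"
        using set_integral_norm_bound[OF gi] by simp
      also have "\<dots> \<le> (LINT r:{R<..}|lborel. 2 * (C + C') * Dm R r)"
        by (rule set_integral_mono[OF set_integrable_abs[OF gi] set_integrable_mult_right[OF Dm_int(3)[OF R]]])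
           (use gbd in auto)
      also have "\<dots> = 2 * (C + C') * (LINT r:{R<..}|lborel. Dm R r)" by simp
      also have "\<dots> \<le> 2 * (C + C') * (4 * A * B * (m R + 1))"
        using Dm_int(4)[OF R] C C' by (intro mult_left_mono) auto
      finally show ?thesis .
    qed
    ultimately have tail: "\<bar>LINT r:{R<..}|lborel. f r\<bar> \<le> C * A * (m R + 1) + 2 * (C + C') * (4 * A * B * (m R + 1))"
      unfolding tail_eq by linarith
    have "\<bar>Iop \<psi> \<rho>\<bar> \<le> C * (m R - m0) + (C * A * (m R + 1) + 2 * (C + C') * (4 * A * B * (m R + 1)))"
      unfolding split using head tail by linarith
    also have "\<dots> \<le> K * (m R + 1)"
    proof -
      have "C * (m R - m0) \<le> C * (m R + 1)" using C(1) m0_nn by (intro mult_left_mono) auto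
      moreover have "2 * (C + C') * (4 * A * B * (m R + 1)) \<le> 2 * (C + C') * (1 + 4 * A * B) * (m R + 1)"
      proof -
        have "2 * (C + C') * (4 * A * B) \<le> 2 * (C + C') * (1 + 4 * A * B)" using C C' by (intro mult_left_mono) auto
        hence "2 * (C + C') * (4 * A * B) * (m R + 1) \<le> 2 * (C + C') * (1 + 4 * A * B) * (m R + 1)"
          using m_pos[OF R] by (intro mult_right_mono) auto
        thus ?thesis by (simp add: mult.assoc)
      qed
      ultimately show ?thesis unfolding K_def by (simp add: algebra_simps)
    qed
    finally show ?thesis unfolding R_def .
  qed
  thus ?thesis by blast
qed

end

definition g0 :: "real \<Rightarrow> real" where "g0 u = (bessel_J0 u - 1) / u"

lemma g0_cont: "isCont g0 u"
proof (cases "u = 0")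
  case True
  have "((\<lambda>h. (bessel_J0 (0 + h) - bessel_J0 0) / h) \<longlongrightarrow> - J1 0) (at 0)"
    using J0_deriv[of 0] by (simp add: DERIV_def)
  hence "((\<lambda>h. (bessel_J0 h - 1) / h) \<longlongrightarrow> 0) (at 0)" by (simp add: J0_0 J1_0)
  hence "(g0 \<longlongrightarrow> 0) (at 0)" unfolding g0_def[abs_def] .
  thus ?thesis using True by (simp add: isCont_def g0_def J0_0)
next
  case False
  thus ?thesis unfolding g0_def[abs_def] by (auto intro!: continuous_intros J0_cont)
qed

definition Efun :: "real \<Rightarrow> real" where "Efun t = ln t + integral {0..t} g0"

lemma E_deriv: assumes "t > 0" shows "(Efun has_real_derivative bessel_J0 t / t) (at t)"
proof -
  have "((\<lambda>x. integral {0..x} g0) has_real_derivative g0 t) (at t within {0..t+1})"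
    by (rule integral_has_real_derivative) (use assms in \<open>auto intro: continuous_at_imp_continuous_on g0_cont\<close>)
  moreover have "at t within {0..t+1} = at t" using assms by (intro at_within_interior) auto
  ultimately have "((\<lambda>x. integral {0..x} g0) has_real_derivative g0 t) (at t)" by simp
  hence "(Efun has_real_derivative 1 / t + g0 t) (at t)"
    unfolding Efun_def[abs_def] using assms by (auto intro!: derivative_eq_intros)
  moreover have "1 / t + g0 t = bessel_J0 t / t" using assms by (simp add: g0_def field_simps)
  ultimately show ?thesis by simp
qed

lemma E_cont: "t > 0 \<Longrightarrow> isCont Efun t" using E_deriv DERIV_isCont by blast

lemma Es_deriv: assumes "s > 0" "r > 0"
  shows "((\<lambda>s. Efun (s * r)) has_real_derivative bessel_J0 (s * r) / s) (at s)"
proof -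
  have "((\<lambda>s. Efun (s * r)) has_real_derivative bessel_J0 (s * r) / (s * r) * r) (at s)"
    by (rule DERIV_chain2[OF E_deriv]) (use assms in \<open>auto intro!: derivative_eq_intros\<close>)
  thus ?thesis using assms by simp
qed

lemma Er_deriv: assumes "\<rho> > 0" "r > 0"
  shows "((\<lambda>r. Efun (\<rho> * r)) has_real_derivative bessel_J0 (\<rho> * r) / r) (at r)"
proof -
  have "((\<lambda>r. Efun (\<rho> * r)) has_real_derivative bessel_J0 (\<rho> * r) / (\<rho> * r) * \<rho>) (at r)"
    by (rule DERIV_chain2[OF E_deriv]) (use assms in \<open>auto intro!: derivative_eq_intros\<close>)
  thus ?thesis using assms by simp
qed

lemma Qbound:
  assumes "r > 0" "c > 0" "c \<le> \<rho>" "c \<le> \<rho>1"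
  shows "\<bar>Efun (\<rho> * r) - Efun (\<rho>1 * r)\<bar> \<le> \<bar>\<rho> - \<rho>1\<bar> * (2 * Jd (c * r) / c)"
proof -
  have gen: "\<bar>Efun (b * r) - Efun (a * r)\<bar> \<le> \<bar>b - a\<bar> * (2 * Jd (c * r) / c)" if ab: "c \<le> a" "a < b" for a b
  proof -
    have dd: "DERIV (\<lambda>s. Efun (s * r)) x :> bessel_J0 (x * r) / x" if "a \<le> x" "x \<le> b" for x
    proof -
      have "x > 0" using that ab assms by linarith
      thus ?thesis using Es_deriv assms(1) by blast
    qed
    obtain z where z: "a < z" "z < b" "Efun (b * r) - Efun (a * r) = (b - a) * (bessel_J0 (z * r) / z)"
      using MVT2[OF ab(2) dd] by blast
    have zc: "z \<ge> c" "z > 0" using z ab assms by auto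
    have "\<bar>bessel_J0 (z * r) / z\<bar> \<le> 2 * Jd (c * r) / c"
    proof -
      have "\<bar>bessel_J0 (z * r)\<bar> \<le> 2 * Jd (z * r)" using J0_Jd[of "z * r"] zc assms by simp
      also have "\<dots> \<le> 2 * Jd (c * r)" using Jd_antimono[of "c * r" "z * r"] zc assms by (simp add: mult_right_mono)
      finally have n: "\<bar>bessel_J0 (z * r)\<bar> \<le> 2 * Jd (c * r)" .
      have "\<bar>bessel_J0 (z * r) / z\<bar> = \<bar>bessel_J0 (z * r)\<bar> / z" using zc by simp
      also have "\<dots> \<le> 2 * Jd (c * r) / z" using n zc by (intro divide_right_mono) auto
      also have "\<dots> \<le> 2 * Jd (c * r) / c" using zc assms Jd_pos[of "c * r"] by (intro divide_left_mono) auto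
      finally show ?thesis .
    qed
    thus ?thesis unfolding z(3) abs_mult using ab by (intro mult_left_mono) auto
  qed
  consider "\<rho> = \<rho>1" | "\<rho>1 < \<rho>" | "\<rho> < \<rho>1" by linarith
  thus ?thesis
  proof cases
    case 1 thus ?thesis by simp
  next
    case 2 thus ?thesis using gen[of \<rho>1 \<rho>] assms by simp
  next
    case 3 thus ?thesis using gen[of \<rho> \<rho>1] assms by (simp add: abs_minus_commute)
  qed
qed

context kset begin

lemma JDphi_to0: assumes "c > 0" shows "((\<lambda>r. Jd (c * r) * (r * \<phi> r)) \<longlongrightarrow> 0) at_top"
proof (rule Lim_null_comparison)
  let ?K = "A * B * (m 1 + 1) / sqrt c"
  show "\<forall>\<^sub>F r in at_top. norm (Jd (c * r) * (r * \<phi> r)) \<le> ?K * r powr (-(1/4))"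
  proof (rule eventually_at_top_linorderI[of 1])
    fix r :: real assume r1: "1 \<le> r"
    hence r: "r > 0" by simp
    have "r * \<phi> r \<le> A * (m r + 1)" by (rule A_bd[OF r])
    also have "\<dots> \<le> A * (B * (m 1 + 1) * (r / 1) powr (1/4))"
      using B_bd[of 1 r] r1 A_nn by (intro mult_left_mono) auto
    finally have p: "r * \<phi> r \<le> A * B * (m 1 + 1) * r powr (1/4)" by simp
    have j: "Jd (c * r) \<le> 1 / sqrt (c * r)" by (simp add: Jd_def)
    have "norm (Jd (c * r) * (r * \<phi> r)) = Jd (c * r) * (r * \<phi> r)"
      using Jd_pos[of "c * r"] phi_nn[OF r] r assms by simp
    also have "\<dots> \<le> (1 / sqrt (c * r)) * (A * B * (m 1 + 1) * r powr (1/4))"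
      by (rule mult_mono[OF j p]) (use phi_nn[OF r] r assms in auto)
    also have "\<dots> = ?K * (r powr (1/4) / sqrt r)" by (simp add: real_sqrt_mult)
    also have "r powr (1/4) / sqrt r = r powr (-(1/4))"
    proof -
      have "sqrt r = r powr (1/2)" using r by (simp add: powr_half_sqrt)
      moreover have "r powr (1/4 - 1/2) = r powr (1/4) / r powr (1/2)" by (rule powr_diff)
      ultimately show ?thesis by simp
    qed
    finally show "norm (Jd (c * r) * (r * \<phi> r)) \<le> ?K * r powr (-(1/4))" .
  qed
  have "((\<lambda>r::real. r powr (-(1/4))) \<longlongrightarrow> 0) at_top" by (intro tendsto_neg_powr filterlim_ident) auto
  thus "((\<lambda>r. ?K * r powr (-(1/4))) \<longlongrightarrow> 0) at_top" using tendsto_mult_right_zero by blast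
qed

lemma Econt_on: "\<rho> > 0 \<Longrightarrow> continuous_on {0<..} (\<lambda>r. Efun (\<rho> * r))"
  by (intro continuous_at_imp_continuous_on ballI isCont_o2[OF _ E_cont]) (auto intro!: continuous_intros)

lemma Qchi_int:
  assumes "Psi \<phi> 0 kh" "\<rho> > 0" "\<rho>1 > 0"
  shows "set_integrable lborel {0<..} (\<lambda>r. (Efun (\<rho> * r) - Efun (\<rho>1 * r)) * kh r)"
proof -
  obtain C where C: "C \<ge> 0" "\<And>r. r > 0 \<Longrightarrow> \<bar>kh r\<bar> \<le> C * \<phi> r" using Psi0_bound[OF assms(1)] by blast
  define c where "c = min \<rho> \<rho>1"
  have c: "c > 0" "c \<le> \<rho>" "c \<le> \<rho>1" using assms by (auto simp: c_def)
  have "1 / c > 0" using c by simp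
  note DI = set_integrable_mult_right[OF Dm_int(1)[OF this], of "\<bar>\<rho> - \<rho>1\<bar> * (2 / c) * C"]
  show ?thesis
  proof (rule si_bound[OF DI])
    show "continuous_on {0<..} (\<lambda>r. (Efun (\<rho> * r) - Efun (\<rho>1 * r)) * kh r)"
      using assms by (intro continuous_intros Econt_on) auto
    fix r :: real assume "r \<in> {0<..}"
    hence r: "r > 0" by simp
    have "\<bar>(Efun (\<rho> * r) - Efun (\<rho>1 * r)) * kh r\<bar> \<le> (\<bar>\<rho> - \<rho>1\<bar> * (2 * Jd (c * r) / c)) * (C * \<phi> r)"
      unfolding abs_mult using Jd_pos[of "c * r"] r c by (intro mult_mono Qbound C r c) auto
    thus "\<bar>(Efun (\<rho> * r) - Efun (\<rho>1 * r)) * kh r\<bar> \<le> \<bar>\<rho> - \<rho>1\<bar> * (2 / c) * C * Dm (1 / c) r"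
      unfolding Dm_inv by (simp add: mult_ac)
  qed simp
qed

lemma Idiff:
  assumes P0: "Psi \<phi> 0 \<psi>" and d: "\<And>r. r > 0 \<Longrightarrow> (\<psi> has_real_derivative \<psi>' r) (at r)"
    and P1: "Psi \<phi> 0 (\<lambda>r. r * \<psi>' r)" and \<rho>: "\<rho> > 0" "\<rho>1 > 0"
  shows "Iop \<psi> \<rho> - Iop \<psi> \<rho>1 = - (LINT r:{0<..}|lborel. (Efun (\<rho> * r) - Efun (\<rho>1 * r)) * (\<psi> r + r * \<psi>' r))"
proof -
  define Q where "Q r = Efun (\<rho> * r) - Efun (\<rho>1 * r)" for r
  define kh where "kh r = \<psi> r + r * \<psi>' r" for r
  have Pchi: "Psi \<phi> 0 kh" unfolding kh_def by (rule Psi0_add[OF P0 P1])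
  define F where "F r = Q r * (r * \<psi> r)" for r
  define f where "f r = (bessel_J0 (\<rho> * r) * \<psi> r - bessel_J0 (\<rho>1 * r) * \<psi> r) + Q r * kh r" for r
  have i1: "set_integrable lborel {0<..} (\<lambda>r. bessel_J0 (\<rho> * r) * \<psi> r)" by (rule J0psi_int[OF P0 \<rho>(1)])
  have i2: "set_integrable lborel {0<..} (\<lambda>r. bessel_J0 (\<rho>1 * r) * \<psi> r)" by (rule J0psi_int[OF P0 \<rho>(2)])
  have i3: "set_integrable lborel {0<..} (\<lambda>r. Q r * kh r)" unfolding Q_def by (rule Qchi_int[OF Pchi \<rho>])
  have i12: "set_integrable lborel {0<..} (\<lambda>r. bessel_J0 (\<rho> * r) * \<psi> r - bessel_J0 (\<rho>1 * r) * \<psi> r)"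
    by (rule set_integral_diff(1)[OF i1 i2])
  have fi: "set_integrable lborel {0<..} f" unfolding f_def by (rule set_integral_add(1)[OF i12 i3])
  have Fd: "(F has_real_derivative f r) (at r)" if r: "r > 0" for r
  proof -
    have e: "((\<lambda>r. Efun (\<rho> * r) - Efun (\<rho>1 * r)) has_real_derivative (bessel_J0 (\<rho> * r) / r - bessel_J0 (\<rho>1 * r) / r)) (at r)"
      by (rule DERIV_diff[OF Er_deriv[OF \<rho>(1) r] Er_deriv[OF \<rho>(2) r]])
    have p: "((\<lambda>r. r * \<psi> r) has_real_derivative (1 * \<psi> r + \<psi>' r * r)) (at r)"
      by (rule DERIV_mult[OF DERIV_ident d[OF r]])
    have "(F has_real_derivative (bessel_J0 (\<rho> * r) / r - bessel_J0 (\<rho>1 * r) / r) * (r * \<psi> r) + (1 * \<psi> r + \<psi>' r * r) * Q r) (at r)"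
      unfolding F_def[abs_def] Q_def[abs_def] by (rule DERIV_mult[OF e p])
    moreover have "(bessel_J0 (\<rho> * r) / r - bessel_J0 (\<rho>1 * r) / r) * (r * \<psi> r) + (1 * \<psi> r + \<psi>' r * r) * Q r = f r"
      unfolding f_def kh_def using r by (simp add: field_simps)
    ultimately show ?thesis by simp
  qed
  have ctpsi: "continuous_on {0<..} \<psi>" using P0 by simp
  have ctchi: "continuous_on {0<..} kh" using Pchi by simp
  have fc: "isCont f r" if r: "r > 0" for r
  proof -
    have "continuous_on {0<..} f" unfolding f_def Q_def
      using \<rho> by (intro continuous_intros Econt_on ctpsi ctchi continuous_at_imp_continuous_on ballI
          isCont_o2[OF _ J0_cont]) auto
    thus ?thesis using r continuous_on_eq_continuous_at[of "{0<..}" f] by auto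
  qed
  define c where "c = min \<rho> \<rho>1"
  have c: "c > 0" "c \<le> \<rho>" "c \<le> \<rho>1" using \<rho> by (auto simp: c_def)
  have Fb: "\<bar>F r\<bar> \<le> (\<bar>\<rho> - \<rho>1\<bar> * (2 / c)) * (Jd (c * r) * \<bar>r * \<psi> r\<bar>)" if r: "r > 0" for r
  proof -
    have "\<bar>F r\<bar> \<le> (\<bar>\<rho> - \<rho>1\<bar> * (2 * Jd (c * r) / c)) * \<bar>r * \<psi> r\<bar>"
      unfolding F_def Q_def abs_mult[of "Efun (\<rho> * r) - Efun (\<rho>1 * r)"] by (intro mult_right_mono Qbound r c) auto
    thus ?thesis by (simp add: mult_ac)
  qed
  obtain C where C: "C \<ge> 0" "\<And>r. r > 0 \<Longrightarrow> \<bar>\<psi> r\<bar> \<le> C * \<phi> r" using Psi0_bound[OF P0] by blast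
  have F0: "(F \<longlongrightarrow> 0) (at_right 0)"
  proof (rule Lim_null_comparison)
    show "\<forall>\<^sub>F r in at_right 0. norm (F r) \<le> (\<bar>\<rho> - \<rho>1\<bar> * (2 / c)) * \<bar>r * \<psi> r\<bar>"
    proof (rule eventually_at_rightI[of 0 1])
      fix r :: real assume "r \<in> {0<..<1}"
      hence r: "r > 0" by simp
      have "(\<bar>\<rho> - \<rho>1\<bar> * (2 / c)) * (Jd (c * r) * \<bar>r * \<psi> r\<bar>) \<le> (\<bar>\<rho> - \<rho>1\<bar> * (2 / c)) * (1 * \<bar>r * \<psi> r\<bar>)"
        using c by (intro mult_left_mono mult_right_mono Jd_le1) auto
      thus "norm (F r) \<le> (\<bar>\<rho> - \<rho>1\<bar> * (2 / c)) * \<bar>r * \<psi> r\<bar>" using Fb[OF r] by simp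
    qed simp
    have "((\<lambda>r. \<bar>r * \<psi> r\<bar>) \<longlongrightarrow> 0) (at_right 0)" using tendsto_rabs_zero[OF Psi_rto0[OF P0]] .
    thus "((\<lambda>r. (\<bar>\<rho> - \<rho>1\<bar> * (2 / c)) * \<bar>r * \<psi> r\<bar>) \<longlongrightarrow> 0) (at_right 0)" using tendsto_mult_right_zero by blast
  qed
  have Finf: "(F \<longlongrightarrow> 0) at_top"
  proof (rule Lim_null_comparison)
    show "\<forall>\<^sub>F r in at_top. norm (F r) \<le> (\<bar>\<rho> - \<rho>1\<bar> * (2 / c) * C) * (Jd (c * r) * (r * \<phi> r))"
    proof (rule eventually_at_top_linorderI[of 1])
      fix r :: real assume "1 \<le> r"
      hence r: "r > 0" by simp
      have "Jd (c * r) * \<bar>r * \<psi> r\<bar> \<le> Jd (c * r) * (r * (C * \<phi> r))"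
        using Jd_pos[of "c * r"] c r C(2)[OF r] by (intro mult_left_mono) (auto simp: abs_mult)
      hence "(\<bar>\<rho> - \<rho>1\<bar> * (2 / c)) * (Jd (c * r) * \<bar>r * \<psi> r\<bar>) \<le> (\<bar>\<rho> - \<rho>1\<bar> * (2 / c)) * (Jd (c * r) * (r * (C * \<phi> r)))"
        by (rule mult_left_mono) (use c in auto)
      thus "norm (F r) \<le> (\<bar>\<rho> - \<rho>1\<bar> * (2 / c) * C) * (Jd (c * r) * (r * \<phi> r))" using Fb[OF r] by (simp add: mult_ac)
    qed
    show "((\<lambda>r. (\<bar>\<rho> - \<rho>1\<bar> * (2 / c) * C) * (Jd (c * r) * (r * \<phi> r))) \<longlongrightarrow> 0) at_top"
      using tendsto_mult_right_zero[OF JDphi_to0[OF c(1)]] by blast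
  qed
  have "(LINT r:{0<..}|lborel. f r) = 0 - 0" by (rule ftc_Ioi[OF Fd fc fi F0 Finf])
  hence "(LINT r:{0<..}|lborel. bessel_J0 (\<rho> * r) * \<psi> r - bessel_J0 (\<rho>1 * r) * \<psi> r) + (LINT r:{0<..}|lborel. Q r * kh r) = 0"
    unfolding f_def using set_integral_add(2)[OF i12 i3] by simp
  hence "Iop \<psi> \<rho> - Iop \<psi> \<rho>1 + (LINT r:{0<..}|lborel. Q r * kh r) = 0"
    unfolding Iop_def using set_integral_diff(2)[OF i1 i2] by simp
  thus ?thesis unfolding Q_def kh_def by linarith
qed

lemma Ideriv:
  assumes P0: "Psi \<phi> 0 \<psi>" and d: "\<And>r. r > 0 \<Longrightarrow> (\<psi> has_real_derivative \<psi>' r) (at r)"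
    and P1: "Psi \<phi> 0 (\<lambda>r. r * \<psi>' r)" and \<rho>1: "\<rho>1 > 0"
  shows "(Iop \<psi> has_real_derivative - Iop (\<lambda>r. \<psi> r + r * \<psi>' r) \<rho>1 / \<rho>1) (at \<rho>1)"
proof -
  define kh where "kh r = \<psi> r + r * \<psi>' r" for r
  have Pkh: "Psi \<phi> 0 kh" unfolding kh_def by (rule Psi0_add[OF P0 P1])
  obtain C where C: "C \<ge> 0" "\<And>r. r > 0 \<Longrightarrow> \<bar>kh r\<bar> \<le> C * \<phi> r" using Psi0_bound[OF Pkh] by blast
  have ctkh: "continuous_on {0<..} kh" using Pkh by simp
  define S where "S = {-(\<rho>1/2)<..<\<rho>1/2}"
  have S: "open S" "0 \<in> S" using \<rho>1 by (auto simp: S_def)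
  define D where "D = - Iop kh \<rho>1 / \<rho>1"
  have "((\<lambda>h. (Iop \<psi> (\<rho>1 + h) - Iop \<psi> \<rho>1) / h) \<longlongrightarrow> D) (at 0 within S)"
    unfolding tendsto_at_iff_sequentially
  proof (intro allI impI)
    fix X :: "nat \<Rightarrow> real"
    assume XS: "\<forall>i. X i \<in> S - {0}" and X0: "X \<longlonglongrightarrow> 0"
    have Xne: "X i \<noteq> 0" for i using XS by auto
    have Xb: "- (\<rho>1/2) < X i" for i using XS by (auto simp: S_def)
    have \<rho>i: "\<rho>1 + X i > 0" for i using Xb[of i] \<rho>1 by linarith
    define Q where "Q i r = Efun ((\<rho>1 + X i) * r) - Efun (\<rho>1 * r)" for i r
    define s where "s i r = (indicator {0<..} r *\<^sub>R (Q i r * kh r)) * (- 1 / X i)" for i r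
    define f where "f r = (indicator {0<..} r *\<^sub>R (bessel_J0 (\<rho>1 * r) * kh r)) * (- 1 / \<rho>1)" for r
    define w where "w r = indicator {0<..} r *\<^sub>R ((4 * C / \<rho>1) * Dm (2 / \<rho>1) r)" for r
    have eq: "(Iop \<psi> (\<rho>1 + X i) - Iop \<psi> \<rho>1) / X i = integral\<^sup>L lborel (s i)" for i
    proof -
      have "Iop \<psi> (\<rho>1 + X i) - Iop \<psi> \<rho>1 = - (LINT r:{0<..}|lborel. Q i r * kh r)"
        unfolding Q_def kh_def by (rule Idiff[OF P0 d P1 \<rho>i \<rho>1])
      thus ?thesis unfolding s_def set_lebesgue_integral_def by simp
    qed
    have intf: "integral\<^sup>L lborel f = D"
      unfolding f_def D_def Iop_def set_lebesgue_integral_def by simp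
    have mkh: "set_borel_measurable lborel {0<..} (\<lambda>r. bessel_J0 (\<rho>1 * r) * kh r)"
    proof (rule sbm_cont)
      have "continuous_on {0<..} (\<lambda>r. bessel_J0 (\<rho>1 * r))"
        by (intro continuous_at_imp_continuous_on ballI isCont_o2[OF _ J0_cont]) (auto intro!: continuous_intros)
      thus "continuous_on {0<..} (\<lambda>r. bessel_J0 (\<rho>1 * r) * kh r)" by (intro continuous_on_mult ctkh)
    qed simp
    have fm: "f \<in> borel_measurable lborel"
      unfolding f_def using mkh unfolding set_borel_measurable_def
      by (intro borel_measurable_times borel_measurable_const)
    have sm: "s i \<in> borel_measurable lborel" for i
    proof -
      have "set_borel_measurable lborel {0<..} (\<lambda>r. Q i r * kh r)"
        unfolding Q_def using \<rho>1 \<rho>i[of i]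
        by (intro sbm_cont) (auto intro!: continuous_intros ctkh Econt_on)
      thus ?thesis unfolding s_def set_borel_measurable_def
        by (intro borel_measurable_times borel_measurable_const)
    qed
    have wi: "integrable lborel w"
    proof -
      have "2 / \<rho>1 > 0" using \<rho>1 by simp
      from set_integrable_mult_right[OF Dm_int(1)[OF this], of "4 * C / \<rho>1"]
      show ?thesis unfolding w_def set_integrable_def .
    qed
    have lim: "AE r in lborel. (\<lambda>i. s i r) \<longlonglongrightarrow> f r"
    proof (rule AE_I2)
      fix r :: real
      show "(\<lambda>i. s i r) \<longlonglongrightarrow> f r"
      proof (cases "r > 0")
        case False thus ?thesis by (simp add: s_def f_def)
      next
        case True
        have "((\<lambda>h. (Efun ((\<rho>1 + h) * r) - Efun (\<rho>1 * r)) / h) \<longlongrightarrow> bessel_J0 (\<rho>1 * r) / \<rho>1) (at 0)"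
          using Es_deriv[OF \<rho>1 True] by (simp add: DERIV_def)
        moreover have "filterlim X (at 0) sequentially"
          by (rule filterlim_atI[OF X0]) (use Xne in auto)
        ultimately have "(\<lambda>i. (Efun ((\<rho>1 + X i) * r) - Efun (\<rho>1 * r)) / X i) \<longlonglongrightarrow> bessel_J0 (\<rho>1 * r) / \<rho>1"
          by (rule filterlim_compose)
        hence "(\<lambda>i. - ((Efun ((\<rho>1 + X i) * r) - Efun (\<rho>1 * r)) / X i * kh r)) \<longlonglongrightarrow> - (bessel_J0 (\<rho>1 * r) / \<rho>1 * kh r)"
          by (intro tendsto_minus tendsto_mult[OF _ tendsto_const])
        moreover have "(\<lambda>i. s i r) = (\<lambda>i. - ((Efun ((\<rho>1 + X i) * r) - Efun (\<rho>1 * r)) / X i * kh r))"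
          using True by (auto simp: s_def Q_def)
        moreover have "f r = - (bessel_J0 (\<rho>1 * r) / \<rho>1 * kh r)" using True by (simp add: f_def)
        ultimately show ?thesis by simp
      qed
    qed
    have bd: "AE r in lborel. norm (s i r) \<le> w r" for i
    proof (rule AE_I2)
      fix r :: real
      show "norm (s i r) \<le> w r"
      proof (cases "r > 0")
        case False thus ?thesis by (simp add: s_def w_def)
      next
        case True
        have c: "\<rho>1 / 2 > 0" "\<rho>1 / 2 \<le> \<rho>1 + X i" "\<rho>1 / 2 \<le> \<rho>1" using \<rho>1 Xb[of i] by auto
        have q: "\<bar>Q i r\<bar> \<le> \<bar>X i\<bar> * (2 * Jd (\<rho>1 / 2 * r) / (\<rho>1 / 2))"
          unfolding Q_def using Qbound[OF True c] by simp
        have "norm (s i r) = \<bar>Q i r\<bar> * \<bar>kh r\<bar> / \<bar>X i\<bar>"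
          using True by (simp add: s_def abs_mult abs_div)
        also have "\<dots> \<le> (\<bar>X i\<bar> * (2 * Jd (\<rho>1 / 2 * r) / (\<rho>1 / 2))) * (C * \<phi> r) / \<bar>X i\<bar>"
          using q C(2)[OF True] Jd_pos[of "\<rho>1 / 2 * r"] True \<rho>1
          by (intro divide_right_mono mult_mono) auto
        also have "\<dots> = (4 * C / \<rho>1) * (\<phi> r * Jd (\<rho>1 / 2 * r))" using Xne[of i] by (simp add: field_simps)
        also have "\<dots> = w r" using True by (simp add: w_def Dm_def mult_ac)
        finally show ?thesis .
      qed
    qed
    have "(\<lambda>i. integral\<^sup>L lborel (s i)) \<longlonglongrightarrow> integral\<^sup>L lborel f"
      by (rule integral_dominated_convergence[OF fm sm wi lim bd])
    thus "((\<lambda>h. (Iop \<psi> (\<rho>1 + h) - Iop \<psi> \<rho>1) / h) \<circ> X) \<longlonglongrightarrow> D"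
      unfolding intf comp_def eq .
  qed
  hence "((\<lambda>h. (Iop \<psi> (\<rho>1 + h) - Iop \<psi> \<rho>1) / h) \<longlongrightarrow> D) (at 0)" using at_within_open[OF S(2,1)] by simp
  thus ?thesis unfolding DERIV_def D_def kh_def .
qed

end

fun SymA :: "(real \<Rightarrow> real) \<Rightarrow> nat \<Rightarrow> real \<Rightarrow> (real \<Rightarrow> real) \<Rightarrow> bool" where
  "SymA w 0 s a = (\<exists>C. \<forall>\<rho>>0. \<bar>a \<rho>\<bar> \<le> C * \<rho> powr s * w \<rho>)"
| "SymA w (Suc N) s a = (SymA w 0 s a \<and> (\<exists>b. (\<forall>\<rho>>0. (a has_real_derivative b \<rho>) (at \<rho>)) \<and> SymA w N s (\<lambda>\<rho>. \<rho> * b \<rho>)))"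

lemma SymA_mono: "SymA w (Suc N) s a \<Longrightarrow> SymA w N s a"
proof (induction N arbitrary: a)
  case 0 thus ?case by simp
next
  case (Suc N)
  then obtain b where b: "\<forall>\<rho>>0. (a has_real_derivative b \<rho>) (at \<rho>)" "SymA w (Suc N) s (\<lambda>\<rho>. \<rho> * b \<rho>)"
    "SymA w 0 s a" unfolding SymA.simps(2)[of w "Suc N"] by blast
  have "SymA w N s (\<lambda>\<rho>. \<rho> * b \<rho>)" using Suc.IH[OF b(2)] .
  thus ?case unfolding SymA.simps(2)[of w N] using b(1,3) by blast
qed

lemma SymA_base: "SymA w N s a \<Longrightarrow> SymA w 0 s a"
  by (cases N) (simp_all only: SymA.simps(2))

lemma SymA0_cong: "SymA w 0 s a \<Longrightarrow> (\<And>\<rho>. \<rho> > 0 \<Longrightarrow> a \<rho> = a' \<rho>) \<Longrightarrow> SymA w 0 s a'"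
proof -
  assume a1: "SymA w 0 s a" and a2: "\<And>\<rho>. \<rho> > 0 \<Longrightarrow> a \<rho> = a' \<rho>"
  from a1 obtain C where C: "\<forall>\<rho>>0. \<bar>a \<rho>\<bar> \<le> C * \<rho> powr s * w \<rho>" by auto
  have "\<bar>a' \<rho>\<bar> \<le> C * \<rho> powr s * w \<rho>" if "\<rho> > 0" for \<rho>
    using C that a2[OF that] by metis
  thus ?thesis by auto
qed

lemma SymA_cong: "SymA w N s a \<Longrightarrow> (\<And>\<rho>. \<rho> > 0 \<Longrightarrow> a \<rho> = a' \<rho>) \<Longrightarrow> SymA w N s a'"
proof (induction N arbitrary: a a')
  case 0
  thus ?case by (rule SymA0_cong)
next
  case (Suc N)
  from Suc.prems(1) obtain b where b: "\<forall>\<rho>>0. (a has_real_derivative b \<rho>) (at \<rho>)" "SymA w N s (\<lambda>\<rho>. \<rho> * b \<rho>)"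
    "SymA w 0 s a" unfolding SymA.simps(2)[of w N] by blast
  have "SymA w 0 s a'" by (rule SymA0_cong[OF b(3) Suc.prems(2)])
  moreover have "\<forall>\<rho>>0. (a' has_real_derivative b \<rho>) (at \<rho>)"
  proof (intro allI impI)
    fix \<rho> :: real assume r: "\<rho> > 0"
    show "(a' has_real_derivative b \<rho>) (at \<rho>)"
      by (rule has_field_derivative_transform_within_open[of a "b \<rho>" \<rho> "{0<..}"])
         (use b(1) r Suc.prems(2) in auto)
  qed
  ultimately show ?case unfolding SymA.simps(2)[of w N] using b(2) by blast
qed

lemma SymA0_add: "SymA w 0 s a1 \<Longrightarrow> SymA w 0 s a2 \<Longrightarrow> SymA w 0 s (\<lambda>\<rho>. a1 \<rho> + a2 \<rho>)"
proof -
  assume "SymA w 0 s a1" "SymA w 0 s a2"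
  then obtain C1 C2 where C: "\<forall>\<rho>>0. \<bar>a1 \<rho>\<bar> \<le> C1 * \<rho> powr s * w \<rho>" "\<forall>\<rho>>0. \<bar>a2 \<rho>\<bar> \<le> C2 * \<rho> powr s * w \<rho>" by auto
  have "\<bar>a1 \<rho> + a2 \<rho>\<bar> \<le> (C1 + C2) * \<rho> powr s * w \<rho>" if "\<rho> > 0" for \<rho>
  proof -
    have "\<bar>a1 \<rho>\<bar> \<le> C1 * \<rho> powr s * w \<rho>" "\<bar>a2 \<rho>\<bar> \<le> C2 * \<rho> powr s * w \<rho>" using C that by auto
    moreover have "(C1 + C2) * \<rho> powr s * w \<rho> = C1 * \<rho> powr s * w \<rho> + C2 * \<rho> powr s * w \<rho>"
      by (simp add: distrib_right)
    ultimately show ?thesis using abs_triangle_ineq[of "a1 \<rho>" "a2 \<rho>"] by linarith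
  qed
  thus ?thesis unfolding SymA.simps(1) by blast
qed

lemma SymA_add: "SymA w N s a1 \<Longrightarrow> SymA w N s a2 \<Longrightarrow> SymA w N s (\<lambda>\<rho>. a1 \<rho> + a2 \<rho>)"
proof (induction N arbitrary: a1 a2)
  case 0 thus ?case by (rule SymA0_add)
next
  case (Suc N)
  from Suc.prems(1) obtain b1 where b1: "\<forall>\<rho>>0. (a1 has_real_derivative b1 \<rho>) (at \<rho>)" "SymA w N s (\<lambda>\<rho>. \<rho> * b1 \<rho>)"
    "SymA w 0 s a1" unfolding SymA.simps(2)[of w N] by blast
  from Suc.prems(2) obtain b2 where b2: "\<forall>\<rho>>0. (a2 has_real_derivative b2 \<rho>) (at \<rho>)" "SymA w N s (\<lambda>\<rho>. \<rho> * b2 \<rho>)"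
    "SymA w 0 s a2" unfolding SymA.simps(2)[of w N] by blast
  note b = b1(1,2) b2(1,2) b1(3) b2(3)
  have "SymA w 0 s (\<lambda>\<rho>. a1 \<rho> + a2 \<rho>)" using b(5,6) by (rule SymA0_add)
  moreover have "SymA w N s (\<lambda>\<rho>. \<rho> * (b1 \<rho> + b2 \<rho>))"
    using Suc.IH[OF b(2) b(4)] by (simp add: distrib_left)
  moreover have "\<forall>\<rho>>0. ((\<lambda>\<rho>. a1 \<rho> + a2 \<rho>) has_real_derivative b1 \<rho> + b2 \<rho>) (at \<rho>)"
    using b(1,3) by (simp add: DERIV_add)
  ultimately show ?case unfolding SymA.simps(2)[of w N] by (intro conjI exI[of _ "\<lambda>\<rho>. b1 \<rho> + b2 \<rho>"]) auto
qed

lemma SymA0_cmult: "SymA w 0 s a \<Longrightarrow> SymA w 0 s (\<lambda>\<rho>. c * a \<rho>)"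
proof -
  assume "SymA w 0 s a"
  then obtain C where C: "\<forall>\<rho>>0. \<bar>a \<rho>\<bar> \<le> C * \<rho> powr s * w \<rho>" by auto
  have "\<bar>c * a \<rho>\<bar> \<le> (\<bar>c\<bar> * C) * \<rho> powr s * w \<rho>" if "\<rho> > 0" for \<rho>
  proof -
    have "\<bar>c * a \<rho>\<bar> = \<bar>c\<bar> * \<bar>a \<rho>\<bar>" by (simp add: abs_mult)
    also have "\<dots> \<le> \<bar>c\<bar> * (C * \<rho> powr s * w \<rho>)" using C that by (intro mult_left_mono) auto
    finally show ?thesis by (simp add: mult_ac)
  qed
  thus ?thesis by auto
qed

lemma SymA_cmult: "SymA w N s a \<Longrightarrow> SymA w N s (\<lambda>\<rho>. c * a \<rho>)"
proof (induction N arbitrary: a)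
  case 0 thus ?case by (rule SymA0_cmult)
next
  case (Suc N)
  from Suc.prems obtain b where b: "\<forall>\<rho>>0. (a has_real_derivative b \<rho>) (at \<rho>)" "SymA w N s (\<lambda>\<rho>. \<rho> * b \<rho>)"
    "SymA w 0 s a" unfolding SymA.simps(2)[of w N] by blast
  have "SymA w 0 s (\<lambda>\<rho>. c * a \<rho>)" using b(3) by (rule SymA0_cmult)
  moreover have "SymA w N s (\<lambda>\<rho>. \<rho> * (c * b \<rho>))" using Suc.IH[OF b(2)] by (simp add: mult_ac)
  moreover have "\<forall>\<rho>>0. ((\<lambda>\<rho>. c * a \<rho>) has_real_derivative c * b \<rho>) (at \<rho>)"
    using b by (auto intro!: derivative_eq_intros)
  ultimately show ?case unfolding SymA.simps(2)[of w N] by (intro conjI exI[of _ "\<lambda>\<rho>. c * b \<rho>"]) auto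
qed

lemma SymA_zero: "SymA w N s (\<lambda>\<rho>. 0)"
proof (induction N)
  case 0 show ?case by (auto intro!: exI[of _ 0])
next
  case (Suc N)
  have "SymA w N s (\<lambda>\<rho>. \<rho> * 0)" using Suc.IH by simp
  moreover have "\<forall>\<rho>>0. ((\<lambda>\<rho>. 0::real) has_real_derivative (\<lambda>_. 0) \<rho>) (at \<rho>)" by auto
  moreover have "SymA w 0 s (\<lambda>\<rho>. 0)" by (auto intro!: exI[of _ 0])
  ultimately show ?case unfolding SymA.simps(2)[of w N] by (intro conjI exI[of _ "\<lambda>_. 0"]) auto
qed

lemma SymA_const: assumes "\<And>\<rho>. \<rho> > 0 \<Longrightarrow> w \<rho> \<ge> 1" shows "SymA w N 0 (\<lambda>\<rho>. c)"
proof (cases N)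
  case 0
  have "\<bar>c\<bar> \<le> \<bar>c\<bar> * \<rho> powr 0 * w \<rho>" if "\<rho> > 0" for \<rho>
    using assms[OF that] that mult_left_mono[of 1 "w \<rho>" "\<bar>c\<bar>"] by simp
  thus ?thesis using 0 by auto
next
  case (Suc M)
  have "SymA w 0 0 (\<lambda>\<rho>. c)"
  proof -
    have "\<bar>c\<bar> \<le> \<bar>c\<bar> * \<rho> powr 0 * w \<rho>" if "\<rho> > 0" for \<rho>
      using assms[OF that] that mult_left_mono[of 1 "w \<rho>" "\<bar>c\<bar>"] by simp
    thus ?thesis by auto
  qed
  moreover have "SymA w M 0 (\<lambda>\<rho>. \<rho> * 0)" using SymA_zero[of w M 0] by simp
  moreover have "\<forall>\<rho>>0. ((\<lambda>\<rho>. c) has_real_derivative (\<lambda>_. 0) \<rho>) (at \<rho>)" by auto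
  ultimately show ?thesis unfolding Suc SymA.simps(2)[of w M] by (intro conjI exI[of _ "\<lambda>_. 0"]) auto
qed

lemma SymA_powr: "SymA w N s a \<Longrightarrow> SymA w N (s + k) (\<lambda>\<rho>. \<rho> powr k * a \<rho>)"
proof (induction N arbitrary: a)
  case 0
  then obtain C where C: "\<forall>\<rho>>0. \<bar>a \<rho>\<bar> \<le> C * \<rho> powr s * w \<rho>" by auto
  have "\<bar>\<rho> powr k * a \<rho>\<bar> \<le> C * \<rho> powr (s + k) * w \<rho>" if "\<rho> > 0" for \<rho>
  proof -
    have "\<bar>\<rho> powr k * a \<rho>\<bar> = \<rho> powr k * \<bar>a \<rho>\<bar>" by (simp add: abs_mult)
    also have "\<dots> \<le> \<rho> powr k * (C * \<rho> powr s * w \<rho>)" using C that by (intro mult_left_mono) auto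
    also have "\<dots> = C * \<rho> powr (s + k) * w \<rho>" by (simp add: powr_add mult_ac)
    finally show ?thesis .
  qed
  thus ?case by auto
next
  case (Suc N)
  from Suc.prems obtain b where b: "\<forall>\<rho>>0. (a has_real_derivative b \<rho>) (at \<rho>)" "SymA w N s (\<lambda>\<rho>. \<rho> * b \<rho>)"
    "SymA w 0 s a" unfolding SymA.simps(2)[of w N] by blast
  have aN: "SymA w N s a" using SymA_mono Suc.prems by blast
  have "SymA w 0 (s + k) (\<lambda>\<rho>. \<rho> powr k * a \<rho>)" using SymA_base[OF Suc.IH[OF aN]] .
  moreover have "\<forall>\<rho>>0. ((\<lambda>\<rho>. \<rho> powr k * a \<rho>) has_real_derivative (\<lambda>\<rho>. k * \<rho> powr (k - 1) * a \<rho> + \<rho> powr k * b \<rho>) \<rho>) (at \<rho>)"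
    using b(1) by (auto intro!: derivative_eq_intros)
  moreover have "SymA w N (s + k) (\<lambda>\<rho>. \<rho> * (k * \<rho> powr (k - 1) * a \<rho> + \<rho> powr k * b \<rho>))"
  proof -
    have "SymA w N (s + k) (\<lambda>\<rho>. k * (\<rho> powr k * a \<rho>) + \<rho> powr k * (\<rho> * b \<rho>))"
      by (intro SymA_add SymA_cmult Suc.IH aN b(2))
    thus ?thesis
    proof (rule SymA_cong)
      fix \<rho> :: real assume "\<rho> > 0"
      hence "\<rho> * \<rho> powr (k - 1) = \<rho> powr k" by (simp add: powr_diff)
      thus "k * (\<rho> powr k * a \<rho>) + \<rho> powr k * (\<rho> * b \<rho>) = \<rho> * (k * \<rho> powr (k - 1) * a \<rho> + \<rho> powr k * b \<rho>)"
        by (simp add: algebra_simps)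
    qed
  qed
  ultimately show ?case unfolding SymA.simps(2)[of w N]
    by (intro conjI exI[of _ "\<lambda>\<rho>. k * \<rho> powr (k - 1) * a \<rho> + \<rho> powr k * b \<rho>"]) auto
qed

lemma Psi_mono_le: "k \<le> k' \<Longrightarrow> Psi \<phi> k' \<psi> \<Longrightarrow> Psi \<phi> k \<psi>"
proof (induction k' arbitrary: k)
  case 0 thus ?case by simp
next
  case (Suc k')
  show ?case
  proof (cases "k = Suc k'")
    case True thus ?thesis using Suc by simp
  next
    case False thus ?thesis using Suc Psi_mono by auto
  qed
qed

context kset begin

lemma I_Sym: "Psi \<phi> (Suc N) \<psi> \<Longrightarrow> SymA (\<lambda>\<rho>. m (1 / \<rho>) + 1) N 0 (Iop \<psi>)"
proof (induction N arbitrary: \<psi>)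
  case 0
  obtain K where K: "\<forall>\<rho>>0. \<bar>Iop \<psi> \<rho>\<bar> \<le> K * (m (1 / \<rho>) + 1)" using Ibound[OF 0] by blast
  thus ?case by auto
next
  case (Suc N)
  have P1: "Psi \<phi> (Suc 0) \<psi>" by (rule Psi_mono_le[OF _ Suc.prems]) simp
  obtain K where K: "\<forall>\<rho>>0. \<bar>Iop \<psi> \<rho>\<bar> \<le> K * (m (1 / \<rho>) + 1)" using Ibound[OF P1] by blast
  from Suc.prems obtain \<psi>' where d: "\<forall>r>0. (\<psi> has_real_derivative \<psi>' r) (at r)"
    and Pd: "Psi \<phi> (Suc N) (\<lambda>r. r * \<psi>' r)" and P0: "Psi \<phi> 0 \<psi>" by auto
  have Pd0: "Psi \<phi> 0 (\<lambda>r. r * \<psi>' r)" by (rule Psi_mono_le[OF _ Pd]) simp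
  have Ps: "Psi \<phi> (Suc N) \<psi>" using Psi_mono[OF Suc.prems] .
  have Pk: "Psi \<phi> (Suc N) (\<lambda>r. \<psi> r + r * \<psi>' r)" by (rule Psi_add[OF Ps Pd])
  have "SymA (\<lambda>\<rho>. m (1 / \<rho>) + 1) N 0 (\<lambda>\<rho>. - 1 * Iop (\<lambda>r. \<psi> r + r * \<psi>' r) \<rho>)"
    by (rule SymA_cmult[OF Suc.IH[OF Pk]])
  hence "SymA (\<lambda>\<rho>. m (1 / \<rho>) + 1) N 0 (\<lambda>\<rho>. \<rho> * (- Iop (\<lambda>r. \<psi> r + r * \<psi>' r) \<rho> / \<rho>))"
    by (rule SymA_cong) simp
  moreover have "\<forall>\<rho>>0. (Iop \<psi> has_real_derivative - Iop (\<lambda>r. \<psi> r + r * \<psi>' r) \<rho> / \<rho>) (at \<rho>)"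
    using Ideriv[OF P0 _ Pd0] d by auto
  moreover have "SymA (\<lambda>\<rho>. m (1 / \<rho>) + 1) 0 0 (Iop \<psi>)" using K by auto
  ultimately show ?case unfolding SymA.simps(2)[of _ N]
    by (intro conjI exI[of _ "\<lambda>\<rho>. - Iop (\<lambda>r. \<psi> r + r * \<psi>' r) \<rho> / \<rho>"]) auto
qed

end

lemma Psi_cong: "Psi \<phi> k \<psi> \<Longrightarrow> (\<And>r. r > 0 \<Longrightarrow> \<psi> r = \<psi>2 r) \<Longrightarrow> Psi \<phi> k \<psi>2"
proof (induction k arbitrary: \<psi> \<psi>2)
  case 0
  from 0(1) obtain C where C: "\<forall>r>0. \<bar>\<psi> r\<bar> \<le> C * \<phi> r" and ct: "continuous_on {0<..} \<psi>" by auto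
  have "\<bar>\<psi>2 r\<bar> \<le> C * \<phi> r" if "r > 0" for r using C that 0(2)[OF that] by metis
  moreover have "continuous_on {0<..} \<psi>2" using continuous_on_cong[of "{0<..}" "{0<..}" \<psi> \<psi>2] ct 0(2) by auto
  ultimately show ?case unfolding Psi.simps(1) by blast
next
  case (Suc k)
  from Suc.prems(1) obtain d where d: "\<forall>r>0. (\<psi> has_real_derivative d r) (at r)" "Psi \<phi> k (\<lambda>r. r * d r)"
    and P0: "Psi \<phi> 0 \<psi>" unfolding Psi.simps(2)[of \<phi> k] by blast
  from P0 obtain C where C: "\<forall>r>0. \<bar>\<psi> r\<bar> \<le> C * \<phi> r" and ct: "continuous_on {0<..} \<psi>" by auto
  have "\<bar>\<psi>2 r\<bar> \<le> C * \<phi> r" if "r > 0" for r using C that Suc.prems(2)[OF that] by metis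
  moreover have "continuous_on {0<..} \<psi>2" using continuous_on_cong[of "{0<..}" "{0<..}" \<psi> \<psi>2] ct Suc.prems(2) by auto
  ultimately have "Psi \<phi> 0 \<psi>2" unfolding Psi.simps(1) by blast
  moreover have "\<forall>r>0. (\<psi>2 has_real_derivative d r) (at r)"
  proof (intro allI impI)
    fix r :: real assume r: "r > 0"
    show "(\<psi>2 has_real_derivative d r) (at r)"
      by (rule has_field_derivative_transform_within_open[of \<psi> "d r" r "{0<..}"])
         (use d(1) r Suc.prems(2) in auto)
  qed
  ultimately show ?case unfolding Psi.simps(2)[of \<phi> k] using d(2) by (intro conjI exI[of _ d]) auto
qed

lemma H1_Psi:
  assumes "H1 n m"
  shows "Psi (deriv m) (n + 3) (deriv m)"
proof -
  define \<phi>j where "\<phi>j j = (deriv ^^ Suc j) m" for j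
  have h1: "\<And>k r. k < n + 4 \<Longrightarrow> r > 0 \<Longrightarrow> ((deriv ^^ k) m has_real_derivative (deriv ^^ Suc k) m r) (at r)"
    using assms unfolding H1_def by blast
  have h2: "continuous_on {0<..} ((deriv ^^ (n + 4)) m)" using assms unfolding H1_def by blast
  obtain C where h5: "\<And>k r. k \<in> {1..n+3} \<Longrightarrow> r > 0 \<Longrightarrow> \<bar>(deriv ^^ k) (deriv m) r\<bar> \<le> C * r powr (- real k) * deriv m r"
    using assms unfolding H1_def by blast
  have nn: "\<And>r. r > 0 \<Longrightarrow> deriv m r \<ge> 0" using assms unfolding H1_def by blast
  have dj: "(\<phi>j j has_real_derivative \<phi>j (Suc j) r) (at r)" if "j \<le> n + 2" "r > 0" for j r
  proof -
    have "Suc j < n + 4" using that by linarith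
    thus ?thesis using h1[of "Suc j" r] that unfolding \<phi>j_def by blast
  qed
  have cj: "continuous_on {0<..} (\<phi>j j)" if "j \<le> n + 3" for j
  proof (cases "j \<le> n + 2")
    case True
    show ?thesis
      by (intro continuous_at_imp_continuous_on ballI) (use dj[OF True] DERIV_isCont in auto)
  next
    case False
    hence "Suc j = n + 4" using that by linarith
    hence "\<phi>j j = (deriv ^^ (n + 4)) m" by (simp only: \<phi>j_def)
    thus ?thesis using h2 by (simp only:)
  qed
  have bj: "\<bar>r ^ j * \<phi>j j r\<bar> \<le> (\<bar>C\<bar> + 1) * deriv m r" if "j \<le> n + 3" "r > 0" for j r
  proof (cases "j = 0")
    case True
    have "1 * deriv m r \<le> (\<bar>C\<bar> + 1) * deriv m r" using nn[OF that(2)] by (intro mult_right_mono) auto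
    thus ?thesis using True nn[OF that(2)] by (simp add: \<phi>j_def)
  next
    case False
    hence "j \<in> {1..n+3}" using that by auto
    from h5[OF this that(2)]
    have "\<bar>\<phi>j j r\<bar> \<le> C * r powr (- real j) * deriv m r" unfolding \<phi>j_def by (simp add: funpow_Suc_right del: funpow.simps)
    hence "\<bar>r ^ j * \<phi>j j r\<bar> \<le> r ^ j * (C * r powr (- real j) * deriv m r)"
      using that by (simp add: abs_mult mult_left_mono)
    also have "r ^ j * (C * r powr (- real j) * deriv m r) = C * deriv m r"
      using that by (simp add: powr_minus powr_realpow[symmetric] field_simps)
    also have "\<dots> \<le> (\<bar>C\<bar> + 1) * deriv m r" using nn[OF that(2)] by (intro mult_right_mono) auto
    finally show ?thesis .
  qed
  have main: "\<forall>j. j + K \<le> n + 3 \<longrightarrow> Psi (deriv m) K (\<lambda>r. r ^ j * \<phi>j j r)" for K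
  proof (induction K)
    case 0
    show ?case
    proof (intro allI impI)
      fix j assume "j + 0 \<le> n + 3"
      hence j: "j \<le> n + 3" by simp
      have "continuous_on {0<..} (\<lambda>r. r ^ j * \<phi>j j r)" by (intro continuous_intros cj[OF j])
      moreover have "\<forall>r>0. \<bar>r ^ j * \<phi>j j r\<bar> \<le> (\<bar>C\<bar> + 1) * deriv m r" using bj[OF j] by auto
      ultimately show "Psi (deriv m) 0 (\<lambda>r. r ^ j * \<phi>j j r)" unfolding Psi.simps(1) by blast
    qed
  next
    case (Suc K)
    show ?case
    proof (intro allI impI)
      fix j assume jK: "j + Suc K \<le> n + 3"
      hence j: "j \<le> n + 2" "j \<le> n + 3" by auto
      have P0: "Psi (deriv m) 0 (\<lambda>r. r ^ j * \<phi>j j r)"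
      proof -
        have "continuous_on {0<..} (\<lambda>r. r ^ j * \<phi>j j r)" by (intro continuous_intros cj[OF j(2)])
        moreover have "\<forall>r>0. \<bar>r ^ j * \<phi>j j r\<bar> \<le> (\<bar>C\<bar> + 1) * deriv m r" using bj[OF j(2)] by auto
        ultimately show ?thesis unfolding Psi.simps(1) by blast
      qed
      define d where "d r = real j * r ^ (j - 1) * \<phi>j j r + r ^ j * \<phi>j (Suc j) r" for r
      have dd: "\<forall>r>0. ((\<lambda>r. r ^ j * \<phi>j j r) has_real_derivative d r) (at r)"
        unfolding d_def using dj[OF j(1)] by (auto intro!: derivative_eq_intros)
      have i1: "Psi (deriv m) K (\<lambda>r. r ^ j * \<phi>j j r)" using Suc.IH jK by auto
      have i2: "Psi (deriv m) K (\<lambda>r. r ^ Suc j * \<phi>j (Suc j) r)" using Suc.IH jK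
        by (metis Suc_le_eq add_Suc add_Suc_right less_or_eq_imp_le)
      have "Psi (deriv m) K (\<lambda>r. real j * (r ^ j * \<phi>j j r) + r ^ Suc j * \<phi>j (Suc j) r)"
        by (intro Psi_add Psi_cmult i1 i2)
      hence "Psi (deriv m) K (\<lambda>r. r * d r)"
      proof (rule Psi_cong)
        fix r :: real assume "r > 0"
        show "real j * (r ^ j * \<phi>j j r) + r ^ Suc j * \<phi>j (Suc j) r = r * d r"
          unfolding d_def by (cases j) (auto simp: algebra_simps)
      qed
      thus "Psi (deriv m) (Suc K) (\<lambda>r. r ^ j * \<phi>j j r)"
        unfolding Psi.simps(2)[of _ K] using P0 dd by (intro conjI exI[of _ d]) auto
    qed
  qed
  have "Psi (deriv m) (n + 3) (\<lambda>r. r ^ 0 * \<phi>j 0 r)" using main[of "n + 3"] by auto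
  thus ?thesis by (simp add: \<phi>j_def)
qed

lemma H_basic:
  assumes "H1 n m"
  shows "\<And>r. r > 0 \<Longrightarrow> (m has_real_derivative deriv m r) (at r)"
    and "continuous_on {0<..} (deriv m)"
    and "\<And>r. r > 0 \<Longrightarrow> deriv m r \<ge> 0"
    and "\<And>r. r > 0 \<Longrightarrow> m r > 0"
    and "\<exists>L. ((\<lambda>r. r * deriv m r) \<longlongrightarrow> L) (at_right 0)"
proof -
  have h1: "\<And>k r. k < n + 4 \<Longrightarrow> r > 0 \<Longrightarrow> ((deriv ^^ k) m has_real_derivative (deriv ^^ Suc k) m r) (at r)"
    using assms unfolding H1_def by blast
  show "\<And>r. r > 0 \<Longrightarrow> (m has_real_derivative deriv m r) (at r)" using h1[of 0] by simp
  have "\<And>r. r > 0 \<Longrightarrow> (deriv m has_real_derivative deriv (deriv m) r) (at r)" using h1[of 1] by simp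
  thus "continuous_on {0<..} (deriv m)"
    by (intro continuous_at_imp_continuous_on ballI) (auto intro: DERIV_isCont)
  show "\<And>r. r > 0 \<Longrightarrow> deriv m r \<ge> 0" "\<And>r. r > 0 \<Longrightarrow> m r > 0" using assms unfolding H1_def by auto
  show "\<exists>L. ((\<lambda>r. r * deriv m r) \<longlongrightarrow> L) (at_right 0)" using assms unfolding H1_def by blast
qed

lemma mono_from_deriv:
  assumes "\<And>r. r > 0 \<Longrightarrow> (m has_real_derivative \<phi> r) (at r)" "\<And>r. r > 0 \<Longrightarrow> \<phi> r \<ge> 0"
    and "0 < a" "a \<le> b"
  shows "m a \<le> m (b::real)"
proof (rule DERIV_nonneg_imp_nondecreasing[OF assms(4)])
  fix x assume "a \<le> x" "x \<le> b"
  hence x: "x > 0" using assms by linarith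
  show "\<exists>y. DERIV m x :> y \<and> 0 \<le> y" using assms(1)[OF x] assms(2)[OF x] by blast
qed

lemma m_has_lim:
  assumes "\<And>r. r > 0 \<Longrightarrow> (m has_real_derivative \<phi> r) (at r)" "\<And>r. r > 0 \<Longrightarrow> \<phi> r \<ge> 0"
    and "\<And>r. r > 0 \<Longrightarrow> m r > 0"
  shows "\<exists>m0. (m \<longlongrightarrow> m0) (at_right 0)"
proof -
  define l where "l = Inf (m ` {0<..})"
  have bdd: "bdd_below (m ` {0<..})" using assms(3) by (auto intro!: bdd_belowI[of _ 0] less_imp_le)
  have "(m \<longlongrightarrow> l) (at_right 0)"
  proof (rule decreasing_tendsto)
    show "\<forall>\<^sub>F n in at_right 0. l \<le> m n"
      by (rule eventually_at_rightI[of 0 1]) (auto simp: l_def intro!: cInf_lower bdd)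
    fix x assume "l < x"
    then obtain y where y: "y \<in> m ` {0<..}" "y < x" unfolding l_def
      using cInf_less_iff[of "m ` {0<..}" x] bdd by auto
    then obtain r0 where r0: "r0 > 0" "m r0 < x" by auto
    show "\<forall>\<^sub>F n in at_right 0. m n < x"
    proof (rule eventually_at_rightI[of 0 r0])
      fix r assume "r \<in> {0<..<r0}"
      hence "m r \<le> m r0" using mono_from_deriv[OF assms(1,2)] by auto
      thus "m r < x" using r0 by linarith
    qed (use r0 in auto)
  qed
  thus ?thesis by blast
qed

lemma rphi_zero:
  assumes "\<And>r. r > 0 \<Longrightarrow> (m has_real_derivative \<phi> r) (at r)" "\<And>r. r > 0 \<Longrightarrow> \<phi> r \<ge> 0"
    and "\<And>r. r > 0 \<Longrightarrow> m r > 0" and L: "((\<lambda>r. r * \<phi> r) \<longlongrightarrow> L) (at_right 0)"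
  shows "L = 0"
proof -
  have "L \<ge> 0"
    by (rule tendsto_lowerbound[OF L]) (auto intro!: eventually_at_rightI[of 0 1] mult_nonneg_nonneg assms(2) simp: less_imp_le)
  moreover have "\<not> L > 0"
  proof
    assume Lp: "L > 0"
    have "\<forall>\<^sub>F r in at_right 0. L / 2 < r * \<phi> r" using order_tendstoD(1)[OF L, of "L/2"] Lp by simp
    then obtain b where b: "b > 0" "\<And>y. y > 0 \<Longrightarrow> y < b \<Longrightarrow> L / 2 < y * \<phi> y"
      unfolding eventually_at_right_field by auto
    define d where "d = b / 2"
    have d: "0 < d" "d < b" using b by (auto simp: d_def)
    define e where "e = d * exp (- (2 * m d / L) - 1)"
    have "2 * m d / L > 0" using assms(3)[of d] d Lp by simp
    hence e: "0 < e" "e < d" using d by (auto simp: e_def)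
    define g where "g x = m x - L / 2 * ln x" for x
    have "g e \<le> g d"
    proof (rule DERIV_nonneg_imp_nondecreasing[OF less_imp_le[OF e(2)]])
      fix x assume x: "e \<le> x" "x \<le> d"
      hence x0: "x > 0" using e by linarith
      have "(g has_real_derivative \<phi> x - L / 2 * (1 / x)) (at x)"
        unfolding g_def[abs_def] using assms(1)[OF x0] x0 by (auto intro!: derivative_eq_intros)
      moreover have "\<phi> x - L / 2 * (1 / x) \<ge> 0"
      proof -
        have "L / 2 < x * \<phi> x" using b(2)[OF x0] x d by linarith
        thus ?thesis using x0 by (simp add: field_simps)
      qed
      ultimately show "\<exists>y. DERIV g x :> y \<and> 0 \<le> y" by blast
    qed
    hence "m e \<le> m d - L / 2 * (ln d - ln e)" unfolding g_def by (simp add: algebra_simps add_divide_distrib diff_divide_distrib)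
    also have "ln d - ln e = 2 * m d / L + 1" using d by (simp add: e_def ln_mult)
    also have "m d - L / 2 * (2 * m d / L + 1) = - L / 2" using Lp by (simp add: field_simps)
    finally have "m e < 0" using Lp by linarith
    thus False using assms(3)[OF e(1)] by linarith
  qed
  ultimately show ?thesis by linarith
qed

lemma H2a_key:
  assumes "\<And>r. r > 0 \<Longrightarrow> (m has_real_derivative \<phi> r) (at r)" "\<And>r. r > 0 \<Longrightarrow> m r > 0" "H2a m"
  shows "\<exists>R1\<ge>1. \<forall>r\<ge>R1. r * \<phi> r \<le> m r / 4"
proof -
  define mt where "mt s = m (exp s)" for s
  obtain \<beta>1 where b1: "\<beta>1 \<ge> 0" "((\<lambda>s. s * deriv mt s / mt s) \<longlongrightarrow> \<beta>1) at_top"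
    using assms(3) unfolding H2a_def Let_def mt_def by blast
  have dmt: "deriv mt s = exp s * \<phi> (exp s)" for s
  proof -
    have "(mt has_real_derivative \<phi> (exp s) * exp s) (at s)"
      unfolding mt_def[abs_def] by (rule DERIV_chain2[OF assms(1) DERIV_exp]) simp
    thus ?thesis by (simp add: DERIV_imp_deriv mult.commute)
  qed
  have "\<forall>\<^sub>F s in at_top. s * deriv mt s / mt s < \<beta>1 + 1" using order_tendstoD(2)[OF b1(2)] by simp
  then obtain S0 where S0: "\<And>s. s \<ge> S0 \<Longrightarrow> s * deriv mt s / mt s < \<beta>1 + 1" unfolding eventually_at_top_linorder by auto
  define S where "S = max S0 (4 * (\<beta>1 + 1))"
  have Spos: "S > 0" using b1 by (simp add: S_def)
  define R1 where "R1 = max 1 (exp S)"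
  have "\<forall>r\<ge>R1. r * \<phi> r \<le> m r / 4"
  proof (intro allI impI)
    fix r assume r: "r \<ge> R1"
    hence r0: "r > 0" by (simp add: R1_def)
    define s where "s = ln r"
    have er: "exp s = r" using r0 by (simp add: s_def)
    have sS: "s \<ge> S" using r by (simp add: R1_def s_def ln_ge_iff)
    have mtp: "mt s > 0" using assms(2)[OF r0] er by (simp add: mt_def)
    have "s * deriv mt s / mt s < \<beta>1 + 1" using S0[of s] sS by (simp add: S_def)
    hence "s * deriv mt s < (\<beta>1 + 1) * mt s" using mtp by (simp add: field_simps)
    moreover have "(\<beta>1 + 1) * mt s \<le> s / 4 * mt s" using sS mtp by (intro mult_right_mono) (auto simp: S_def)
    ultimately have "s * deriv mt s \<le> s * (mt s / 4)" by simp
    hence "deriv mt s \<le> mt s / 4" using sS Spos by (simp add: mult_le_cancel_left)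
    thus "r * \<phi> r \<le> m r / 4" using dmt[of s] er by (simp add: mt_def)
  qed
  thus ?thesis by (intro exI[of _ R1]) (auto simp: R1_def)
qed

lemma growth_bd:
  assumes d: "\<And>r. r > 0 \<Longrightarrow> (m has_real_derivative \<phi> r) (at r)" and pos: "\<And>r. r > 0 \<Longrightarrow> m r > 0"
    and key: "\<forall>r\<ge>R1. r * \<phi> r \<le> m r / 4" and R1: "R1 > 0"
    and R: "R1 \<le> R" "R \<le> r"
  shows "m r \<le> m R * (r / R) powr (1/4)"
proof -
  define h where "h x = ln (m x) - ln x / 4" for x
  have "h r \<le> h R"
  proof (rule DERIV_nonpos_imp_nonincreasing[OF R(2)])
    fix x assume x: "R \<le> x" "x \<le> r"
    hence x0: "x > 0" using R R1 by linarith
    have "(h has_real_derivative \<phi> x / m x - 1 / x / 4) (at x)"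
      unfolding h_def[abs_def] using d[OF x0] pos[OF x0] x0 by (auto intro!: derivative_eq_intros)
    moreover have "\<phi> x / m x - 1 / x / 4 \<le> 0"
    proof -
      have "x * \<phi> x \<le> m x / 4" using key x R by auto
      thus ?thesis using x0 pos[OF x0] by (simp add: field_simps)
    qed
    ultimately show "\<exists>y. DERIV h x :> y \<and> y \<le> 0" by blast
  qed
  hence "ln (m r) \<le> ln (m R) + (ln r - ln R) / 4" unfolding h_def by (simp add: field_simps)
  hence "m r \<le> exp (ln (m R) + (ln r - ln R) / 4)"
    using pos[of r] R R1 by (subst ln_le_cancel_iff[symmetric]) auto
  also have "\<dots> = m R * (r / R) powr (1/4)"
    using pos[of R] R R1 by (simp add: exp_add powr_def ln_div)
  finally show ?thesis .
qed

lemma kset_inst: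
  assumes H1: "H1 n m" and H2: "H2a m"
  shows "\<exists>m0 A B. kset m (deriv m) m0 A B"
proof -
  note hb = H_basic[OF H1]
  obtain m0 where m0: "(m \<longlongrightarrow> m0) (at_right 0)" using m_has_lim[OF hb(1,3,4)] by blast
  obtain L where L: "((\<lambda>r. r * deriv m r) \<longlongrightarrow> L) (at_right 0)" using hb(5) by blast
  have L0: "L = 0" by (rule rphi_zero[OF hb(1,3,4) L])
  obtain R1 where R1: "R1 \<ge> 1" "\<forall>r\<ge>R1. r * deriv m r \<le> m r / 4" using H2a_key[OF hb(1,4) H2] by blast
  have "\<forall>\<^sub>F r in at_right 0. r * deriv m r < 1" using order_tendstoD(2)[OF L] L0 by simp
  then obtain \<delta> where \<delta>: "\<delta> > 0" "\<And>y. y > 0 \<Longrightarrow> y < \<delta> \<Longrightarrow> y * deriv m y < 1"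
    unfolding eventually_at_right_field by auto
  define a where "a = min (\<delta> / 2) R1"
  have a: "a > 0" "a \<le> R1" "a < \<delta>" using \<delta> R1 by (auto simp: a_def)
  have "continuous_on {a..R1} (\<lambda>r. r * deriv m r)"
    using a by (intro continuous_intros continuous_on_subset[OF hb(2)]) auto
  then obtain xm where xm: "xm \<in> {a..R1}" "\<forall>y\<in>{a..R1}. y * deriv m y \<le> xm * deriv m xm"
    using continuous_attains_sup[of "{a..R1}" "\<lambda>r. r * deriv m r"] a by auto
  define A where "A = max 1 (xm * deriv m xm)"
  have A1: "A \<ge> 1" by (simp add: A_def)
  have Abd: "r * deriv m r \<le> A * (m r + 1)" if r: "r > 0" for r
  proof -
    have mr: "m r > 0" using hb(4)[OF r] .
    have AA: "A \<le> A * (m r + 1)" using A1 mr mult_left_mono[of 1 "m r + 1" A] by simp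
    have m1: "m r + 1 \<le> A * (m r + 1)" using A1 mr mult_right_mono[of 1 A "m r + 1"] by simp
    show ?thesis
    proof (cases "r < \<delta>")
      case True thus ?thesis using \<delta>(2)[OF r] A1 AA by linarith
    next
      case False
      show ?thesis
      proof (cases "r \<le> R1")
        case True
        hence "r \<in> {a..R1}" using False a by auto
        hence "r * deriv m r \<le> xm * deriv m xm" using xm(2) by blast
        hence "r * deriv m r \<le> A" unfolding A_def by linarith
        thus ?thesis using AA by linarith
      next
        case False
        hence "r * deriv m r \<le> m r / 4" using R1 by auto
        also have "\<dots> \<le> m r + 1" using mr by simp
        finally show ?thesis using m1 by linarith
      qed
    qed
  qed
  define B where "B = m R1 + 1"
  have R1p: "R1 > 0" using R1 by linarith
  have mono: "\<And>a b. 0 < a \<Longrightarrow> a \<le> b \<Longrightarrow> m a \<le> m b" using mono_from_deriv[OF hb(1,3)] by blast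
  have Bbd: "m r + 1 \<le> B * (m R + 1) * (r / R) powr (1/4)" if R: "0 < R" "R \<le> r" for R r
  proof -
    have rR: "(r / R) powr (1/4) \<ge> 1" using R by (simp add: ge_one_powr_ge_zero)
    have mR: "m R + 1 \<ge> 1" using hb(4)[OF R(1)] by simp
    have B1: "B \<ge> 1" using hb(4)[OF R1p] by (simp add: B_def)
    have mB: "m R1 + 1 \<le> B" by (simp add: B_def)
    show ?thesis
    proof (cases "R1 \<le> R")
      case True
      have "m r \<le> m R * (r / R) powr (1/4)" by (rule growth_bd[OF hb(1,4) R1(2) R1p True R(2)])
      hence "m r + 1 \<le> (m R + 1) * (r / R) powr (1/4)" using rR by (simp add: algebra_simps)
      also have "\<dots> \<le> B * ((m R + 1) * (r / R) powr (1/4))"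
        using B1 mult_right_mono[of 1 B "(m R + 1) * (r / R) powr (1/4)"] mR rR by simp
      finally show ?thesis by (simp add: mult_ac)
    next
      case False
      show ?thesis
      proof (cases "R1 \<le> r")
        case True
        have "m r \<le> m R1 * (r / R1) powr (1/4)" by (rule growth_bd[OF hb(1,4) R1(2) R1p order_refl True])
        also have "\<dots> \<le> m R1 * (r / R) powr (1/4)"
          using False R R1p hb(4)[OF R1p] by (intro mult_left_mono powr_mono2 divide_left_mono) auto
        finally have "m r + 1 \<le> (m R1 + 1) * (r / R) powr (1/4)" using rR by (simp add: algebra_simps)
        also have "\<dots> \<le> B * (m R + 1) * (r / R) powr (1/4)"
        proof (rule mult_right_mono)
          show "m R1 + 1 \<le> B * (m R + 1)" using B1 mR mult_left_mono[of 1 "m R + 1" B] by (simp add: B_def)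
        qed (use rR in auto)
        finally show ?thesis .
      next
        case False
        have "m r + 1 \<le> m R1 + 1" using mono[of r R1] False R by simp
        also have "\<dots> \<le> B * (m R + 1) * (r / R) powr (1/4)"
        proof -
          have "B * 1 * 1 \<le> B * (m R + 1) * (r / R) powr (1/4)"
            using B1 mR rR by (intro mult_mono) auto
          thus ?thesis by (simp add: B_def)
        qed
        finally show ?thesis .
      qed
    qed
  qed
  have "kset m (deriv m) m0 A B"
    by (unfold_locales) (use hb m0 L L0 Abd Bbd in auto)
  thus ?thesis by blast
qed

definition Tm :: "(real \<Rightarrow> real) \<times> nat \<times> nat \<times> (real^2) \<Rightarrow> real^2 \<Rightarrow> real^2" where
  "Tm t x = (case t of (a, i, j, v) \<Rightarrow> (a (norm x) * (x$1)^i * (x$2)^j) *\<^sub>R v)"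

definition sumT :: "((real \<Rightarrow> real) \<times> nat \<times> nat \<times> (real^2)) list \<Rightarrow> real^2 \<Rightarrow> real^2" where
  "sumT L x = sum_list (map (\<lambda>t. Tm t x) L)"

lemma Tm_deriv:
  fixes x :: "real^2"
  assumes x: "x \<noteq> 0" and a: "(a has_real_derivative b (norm x)) (at (norm x))"
  shows "((\<lambda>x. (a (norm x) * (x$1)^i * (x$2)^j) *\<^sub>R v) has_derivative
     (\<lambda>h. (b (norm x) * (h \<bullet> sgn x) * (x$1)^i * (x$2)^j
          + a (norm x) * (real i * h$1 * (x$1)^(i-1)) * (x$2)^j
          + a (norm x) * (x$1)^i * (real j * h$2 * (x$2)^(j-1))) *\<^sub>R v)) (at x)"
proof -
  have na: "((\<lambda>x. a (norm x)) has_derivative (\<lambda>h. b (norm x) * (h \<bullet> sgn x))) (at x)"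
    using has_derivative_compose[OF has_derivative_norm[OF x] a[unfolded has_field_derivative_def]] .
  have c1: "((\<lambda>x::real^2. x$1) has_derivative (\<lambda>h. h$1)) (at x)"
    by (rule bounded_linear_imp_has_derivative) (rule bounded_linear_vec_nth)
  have c2: "((\<lambda>x::real^2. x$2) has_derivative (\<lambda>h. h$2)) (at x)"
    by (rule bounded_linear_imp_has_derivative) (rule bounded_linear_vec_nth)
  show ?thesis
    by (rule has_derivative_eq_rhs, (rule derivative_eq_intros na c1 c2 | simp)+) (simp add: algebra_simps)
qed

lemma Tm_fun: "Tm (a, i, j, v) = (\<lambda>x. (a (norm x) * (x$1)^i * (x$2)^j) *\<^sub>R v)"
  by (rule ext) (simp add: Tm_def)

lemma two_ne: "(1::2) \<noteq> 2" by simp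

lemma SymA_div:
  assumes "SymA w N s (\<lambda>\<rho>. \<rho> * b \<rho>)"
  shows "SymA w N (s - 2) (\<lambda>\<rho>. b \<rho> / \<rho>)"
proof -
  have "SymA w N (s - 2) (\<lambda>\<rho>. \<rho> powr (-2) * (\<rho> * b \<rho>))" using SymA_powr[OF assms, of "-2"] by simp
  thus ?thesis
  proof (rule SymA_cong)
    fix \<rho> :: real assume r: "\<rho> > 0"
    have "\<rho> powr (-2) = 1 / \<rho>^2" using r by (simp add: powr_minus powr_realpow divide_inverse)
    thus "\<rho> powr (-2) * (\<rho> * b \<rho>) = b \<rho> / \<rho>" using r by (simp add: power2_eq_square field_simps)
  qed
qed

lemma term_deriv:
  fixes k :: 2
  assumes A: "SymA w (Suc N) (s - real i - real j) a"
  shows "\<exists>L1. (\<forall>t\<in>set L1. case t of (a', i', j', v') \<Rightarrow> SymA w N (s - 1 - real i' - real j') a') \<and>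
     (\<forall>x::real^2. x \<noteq> 0 \<longrightarrow> (\<exists>D. (Tm (a, i, j, v) has_derivative D) (at x) \<and> D (axis k 1) = sumT L1 x))"
proof -
  from A obtain b where b: "\<forall>\<rho>>0. (a has_real_derivative b \<rho>) (at \<rho>)" "SymA w N (s - real i - real j) (\<lambda>\<rho>. \<rho> * b \<rho>)"
    unfolding SymA.simps(2)[of w N] by blast
  have aN: "SymA w N (s - real i - real j) a" using SymA_mono[OF A] .
  have bq: "SymA w N (s - real i - real j - 2) (\<lambda>\<rho>. b \<rho> / \<rho>)" by (rule SymA_div[OF b(2)])
  have ia: "SymA w N (s - 1 - real (i - 1) - real j) (\<lambda>\<rho>. real i * a \<rho>)"
  proof (cases i)
    case 0
    have "SymA w N (s - 1 - real (i - 1) - real j) (\<lambda>\<rho>. 0)" by (rule SymA_zero)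
    thus ?thesis by (rule SymA_cong) (simp add: 0)
  next
    case (Suc i')
    have "SymA w N (s - real i - real j) (\<lambda>\<rho>. real i * a \<rho>)" by (rule SymA_cmult[OF aN])
    thus ?thesis using Suc by (simp add: algebra_simps)
  qed
  have ja: "SymA w N (s - 1 - real i - real (j - 1)) (\<lambda>\<rho>. real j * a \<rho>)"
  proof (cases j)
    case 0
    have "SymA w N (s - 1 - real i - real (j - 1)) (\<lambda>\<rho>. 0)" by (rule SymA_zero)
    thus ?thesis by (rule SymA_cong) (simp add: 0)
  next
    case (Suc j')
    have "SymA w N (s - real i - real j) (\<lambda>\<rho>. real j * a \<rho>)" by (rule SymA_cmult[OF aN])
    thus ?thesis using Suc by (simp add: algebra_simps)
  qed
  have Dx: "(Tm (a, i, j, v) has_derivative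
     (\<lambda>h. (b (norm x) * (h \<bullet> sgn x) * (x$1)^i * (x$2)^j
          + a (norm x) * (real i * h$1 * (x$1)^(i-1)) * (x$2)^j
          + a (norm x) * (x$1)^i * (real j * h$2 * (x$2)^(j-1))) *\<^sub>R v)) (at x)" if x: "x \<noteq> 0" for x :: "real^2"
    unfolding Tm_fun by (rule Tm_deriv[OF x]) (use b(1) x in auto)
  have sg: "axis k 1 \<bullet> sgn x = x $ k / norm x" for x :: "real^2"
    by (simp add: inner_axis' sgn_div_norm divide_inverse mult.commute)
  consider "k = 1" | "k = 2" using exhaust_2[of k] by blast
  thus ?thesis
  proof cases
    case 1
    let ?L1 = "[(\<lambda>\<rho>. b \<rho> / \<rho>, Suc i, j, v), (\<lambda>\<rho>. real i * a \<rho>, i - 1, j, v)]"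
    have "\<forall>t\<in>set ?L1. case t of (a', i', j', v') \<Rightarrow> SymA w N (s - 1 - real i' - real j') a'"
      using bq ia by (auto simp: algebra_simps)
    moreover have "\<forall>x::real^2. x \<noteq> 0 \<longrightarrow> (\<exists>D. (Tm (a, i, j, v) has_derivative D) (at x) \<and> D (axis k 1) = sumT ?L1 x)"
    proof (intro allI impI)
      fix x :: "real^2" assume x: "x \<noteq> 0"
      have "(b (norm x) * (axis k 1 \<bullet> sgn x) * (x$1)^i * (x$2)^j
          + a (norm x) * (real i * (axis k 1)$1 * (x$1)^(i-1)) * (x$2)^j
          + a (norm x) * (x$1)^i * (real j * (axis k 1)$2 * (x$2)^(j-1))) *\<^sub>R v = sumT ?L1 x"
      proof -
        have ax: "(axis k 1 :: real^2)$1 = 1" "(axis k 1 :: real^2)$2 = 0" using 1 by (simp_all add: axis_def)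
        have nx: "norm x \<noteq> 0" using x by simp
        have e1: "b (norm x) * (x$1 / norm x) * (x$1)^i * (x$2)^j = b (norm x) / norm x * (x$1)^Suc i * (x$2)^j"
          using nx by (simp add: field_simps)
        have "sumT ?L1 x = (b (norm x) / norm x * (x$1)^Suc i * (x$2)^j) *\<^sub>R v + ((real i * a (norm x)) * (x$1)^(i-1) * (x$2)^j) *\<^sub>R v" by (simp add: sumT_def Tm_def)
        thus ?thesis unfolding sg ax e1 using 1 by (simp add: scaleR_add_left[symmetric] mult_ac)
      qed
      thus "\<exists>D. (Tm (a, i, j, v) has_derivative D) (at x) \<and> D (axis k 1) = sumT ?L1 x"
        using Dx[OF x] by blast
    qed
    ultimately show ?thesis by blast
  next
    case 2
    let ?L1 = "[(\<lambda>\<rho>. b \<rho> / \<rho>, i, Suc j, v), (\<lambda>\<rho>. real j * a \<rho>, i, j - 1, v)]"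
    have "\<forall>t\<in>set ?L1. case t of (a', i', j', v') \<Rightarrow> SymA w N (s - 1 - real i' - real j') a'"
      using bq ja by (auto simp: algebra_simps)
    moreover have "\<forall>x::real^2. x \<noteq> 0 \<longrightarrow> (\<exists>D. (Tm (a, i, j, v) has_derivative D) (at x) \<and> D (axis k 1) = sumT ?L1 x)"
    proof (intro allI impI)
      fix x :: "real^2" assume x: "x \<noteq> 0"
      have "(b (norm x) * (axis k 1 \<bullet> sgn x) * (x$1)^i * (x$2)^j
          + a (norm x) * (real i * (axis k 1)$1 * (x$1)^(i-1)) * (x$2)^j
          + a (norm x) * (x$1)^i * (real j * (axis k 1)$2 * (x$2)^(j-1))) *\<^sub>R v = sumT ?L1 x"
      proof -
        have ax: "(axis k 1 :: real^2)$1 = 0" "(axis k 1 :: real^2)$2 = 1" using 2 by (simp_all add: axis_def)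
        have nx: "norm x \<noteq> 0" using x by simp
        have e1: "b (norm x) * (x$2 / norm x) * (x$1)^i * (x$2)^j = b (norm x) / norm x * (x$1)^i * (x$2)^Suc j"
          using nx by (simp add: field_simps)
        have "sumT ?L1 x = (b (norm x) / norm x * (x$1)^i * (x$2)^Suc j) *\<^sub>R v + ((real j * a (norm x)) * (x$1)^i * (x$2)^(j-1)) *\<^sub>R v" by (simp add: sumT_def Tm_def)
        thus ?thesis unfolding sg ax e1 using 2 by (simp add: scaleR_add_left[symmetric] mult_ac)
      qed
      thus "\<exists>D. (Tm (a, i, j, v) has_derivative D) (at x) \<and> D (axis k 1) = sumT ?L1 x"
        using Dx[OF x] by blast
    qed
    ultimately show ?thesis by blast
  qed
qed

lemma sumT_Nil: "sumT [] = (\<lambda>x. 0)" by (rule ext) (simp add: sumT_def)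
lemma sumT_Cons: "sumT (t # L) = (\<lambda>x. Tm t x + sumT L x)" by (rule ext) (simp add: sumT_def)
lemma sumT_append: "sumT (L1 @ L2) x = sumT L1 x + sumT L2 x" by (simp add: sumT_def)

lemma list_deriv:
  fixes k :: 2
  assumes "\<forall>t\<in>set L. case t of (a, i, j, v) \<Rightarrow> SymA w (Suc N) (s - real i - real j) a"
  shows "\<exists>L'. (\<forall>t\<in>set L'. case t of (a, i, j, v) \<Rightarrow> SymA w N (s - 1 - real i - real j) a) \<and>
     (\<forall>x::real^2. x \<noteq> 0 \<longrightarrow> (\<exists>D. (sumT L has_derivative D) (at x) \<and> D (axis k 1) = sumT L' x))"
  using assms
proof (induction L)
  case Nil
  show ?case
    by (intro exI[of _ "[]"] conjI allI impI exI[of _ "\<lambda>h. 0"]) (auto simp: sumT_Nil)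
next
  case (Cons t L)
  obtain a i j v where t: "t = (a, i, j, v)" by (cases t) auto
  have At: "SymA w (Suc N) (s - real i - real j) a" using Cons.prems t by auto
  obtain L1 where L1: "\<forall>t\<in>set L1. case t of (a', i', j', v') \<Rightarrow> SymA w N (s - 1 - real i' - real j') a'"
    "\<forall>x::real^2. x \<noteq> 0 \<longrightarrow> (\<exists>D. (Tm (a, i, j, v) has_derivative D) (at x) \<and> D (axis k 1) = sumT L1 x)"
    using term_deriv[OF At, where k=k and v=v] by blast
  obtain L2 where L2: "\<forall>t\<in>set L2. case t of (a, i, j, v) \<Rightarrow> SymA w N (s - 1 - real i - real j) a"
    "\<forall>x::real^2. x \<noteq> 0 \<longrightarrow> (\<exists>D. (sumT L has_derivative D) (at x) \<and> D (axis k 1) = sumT L2 x)"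
    using Cons.IH Cons.prems by auto
  have "\<forall>x::real^2. x \<noteq> 0 \<longrightarrow> (\<exists>D. (sumT (t # L) has_derivative D) (at x) \<and> D (axis k 1) = sumT (L1 @ L2) x)"
  proof (intro allI impI)
    fix x :: "real^2" assume x: "x \<noteq> 0"
    obtain D1 where D1: "(Tm (a, i, j, v) has_derivative D1) (at x)" "D1 (axis k 1) = sumT L1 x" using L1(2) x by blast
    obtain D2 where D2: "(sumT L has_derivative D2) (at x)" "D2 (axis k 1) = sumT L2 x" using L2(2) x by blast
    have "(sumT (t # L) has_derivative (\<lambda>h. D1 h + D2 h)) (at x)"
      unfolding sumT_Cons t by (rule has_derivative_add[OF D1(1) D2(1)])
    thus "\<exists>D. (sumT (t # L) has_derivative D) (at x) \<and> D (axis k 1) = sumT (L1 @ L2) x"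
      using D1(2) D2(2) by (intro exI[of _ "\<lambda>h. D1 h + D2 h"]) (simp add: sumT_append)
  qed
  moreover have "\<forall>t\<in>set (L1 @ L2). case t of (a, i, j, v) \<Rightarrow> SymA w N (s - 1 - real i - real j) a"
    using L1(1) L2(1) by auto
  ultimately show ?case by blast
qed

definition Good :: "(real \<Rightarrow> real) \<Rightarrow> nat \<Rightarrow> real \<Rightarrow> (real^2 \<Rightarrow> real^2) \<Rightarrow> bool" where
  "Good w N s F \<longleftrightarrow> (\<exists>L. (\<forall>t\<in>set L. case t of (a, i, j, v) \<Rightarrow> SymA w N (s - real i - real j) a)
      \<and> (\<forall>x. x \<noteq> 0 \<longrightarrow> F x = sumT L x))"

lemma Good_deriv:
  fixes k :: 2
  assumes "Good w (Suc N) s F"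
  shows "\<forall>x. x \<noteq> 0 \<longrightarrow> F differentiable (at x)"
    and "Good w N (s - 1) (\<lambda>x. frechet_derivative F (at x) (axis k 1))"
proof -
  obtain L where L: "\<forall>t\<in>set L. case t of (a, i, j, v) \<Rightarrow> SymA w (Suc N) (s - real i - real j) a"
    "\<forall>x. x \<noteq> 0 \<longrightarrow> F x = sumT L x" using assms unfolding Good_def by blast
  obtain L' where L': "\<forall>t\<in>set L'. case t of (a, i, j, v) \<Rightarrow> SymA w N (s - 1 - real i - real j) a"
    "\<forall>x::real^2. x \<noteq> 0 \<longrightarrow> (\<exists>D. (sumT L has_derivative D) (at x) \<and> D (axis k 1) = sumT L' x)"
    using list_deriv[OF L(1), of k] by blast
  have FD: "\<exists>D. (F has_derivative D) (at x) \<and> D (axis k 1) = sumT L' x" if x: "x \<noteq> 0" for x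
  proof -
    obtain D where D: "(sumT L has_derivative D) (at x)" "D (axis k 1) = sumT L' x" using L'(2) x by blast
    have "(F has_derivative D) (at x)"
      by (rule has_derivative_transform_within_open[OF D(1), of "- {0}"]) (use x L(2) in auto)
    thus ?thesis using D(2) by blast
  qed
  show "\<forall>x. x \<noteq> 0 \<longrightarrow> F differentiable (at x)" using FD differentiableI by blast
  have "\<forall>x. x \<noteq> 0 \<longrightarrow> frechet_derivative F (at x) (axis k 1) = sumT L' x"
  proof (intro allI impI)
    fix x :: "real^2" assume x: "x \<noteq> 0"
    obtain D where D: "(F has_derivative D) (at x)" "D (axis k 1) = sumT L' x" using FD[OF x] by blast
    show "frechet_derivative F (at x) (axis k 1) = sumT L' x" using frechet_derivative_at[OF D(1)] D(2) by simp
  qed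
  thus "Good w N (s - 1) (\<lambda>x. frechet_derivative F (at x) (axis k 1))"
    unfolding Good_def using L'(1) by (intro exI[of _ L']) auto
qed

lemma term_bound:
  fixes x :: "real^2"
  assumes A: "SymA w 0 (s - real i - real j) a" and x: "x \<noteq> 0"
  obtains C where "\<And>x::real^2. x \<noteq> 0 \<Longrightarrow> norm (Tm (a, i, j, v) x) \<le> C * norm x powr s * w (norm x)"
proof -
  from A obtain C where C: "\<forall>\<rho>>0. \<bar>a \<rho>\<bar> \<le> C * \<rho> powr (s - real i - real j) * w \<rho>" by auto
  have "norm (Tm (a, i, j, v) x) \<le> (C * norm v) * norm x powr s * w (norm x)" if x: "x \<noteq> 0" for x :: "real^2"
  proof -
    define \<rho> where "\<rho> = norm x"
    have r: "\<rho> > 0" using x by (simp add: \<rho>_def)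
    have ca: "\<bar>a \<rho>\<bar> \<le> C * \<rho> powr (s - real i - real j) * w \<rho>" using C r by auto
    have c1: "\<bar>x$1\<bar>^i \<le> \<rho>^i" unfolding \<rho>_def by (intro power_mono component_le_norm_cart) auto
    have c2: "\<bar>x$2\<bar>^j \<le> \<rho>^j" unfolding \<rho>_def by (intro power_mono component_le_norm_cart) auto
    have "norm (Tm (a, i, j, v) x) = \<bar>a \<rho>\<bar> * (\<bar>x$1\<bar>^i * \<bar>x$2\<bar>^j) * norm v"
      by (simp add: Tm_def \<rho>_def abs_mult power_abs mult_ac)
    also have "\<dots> \<le> (C * \<rho> powr (s - real i - real j) * w \<rho>) * (\<rho>^i * \<rho>^j) * norm v"
      using ca c1 c2 r by (intro mult_right_mono mult_mono) auto
    also have "\<rho> powr (s - real i - real j) * (\<rho>^i * \<rho>^j) = \<rho> powr s"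
    proof -
      have "\<rho>^i * \<rho>^j = \<rho> powr (real i + real j)" using r by (simp add: powr_add powr_realpow)
      hence "\<rho> powr (s - real i - real j) * (\<rho>^i * \<rho>^j) = \<rho> powr (s - real i - real j) * \<rho> powr (real i + real j)"
        by simp
      also have "\<dots> = \<rho> powr (s - real i - real j + (real i + real j))" by (rule powr_add[symmetric])
      finally show ?thesis by simp
    qed
    hence "(C * \<rho> powr (s - real i - real j) * w \<rho>) * (\<rho>^i * \<rho>^j) * norm v = (C * norm v) * \<rho> powr s * w \<rho>"
      by (simp add: mult_ac)
    finally show ?thesis unfolding \<rho>_def .
  qed
  thus ?thesis using that by blast
qed

lemma Good_bound:
  assumes "Good w 0 s F"
  shows "\<exists>C. \<forall>x::real^2. x \<noteq> 0 \<longrightarrow> norm (F x) \<le> C * norm x powr s * w (norm x)"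
proof -
  obtain L where L: "\<forall>t\<in>set L. case t of (a, i, j, v) \<Rightarrow> SymA w 0 (s - real i - real j) a"
    "\<forall>x. x \<noteq> 0 \<longrightarrow> F x = sumT L x" using assms unfolding Good_def by blast
  have "\<exists>C. \<forall>x::real^2. x \<noteq> 0 \<longrightarrow> norm (sumT L x) \<le> C * norm x powr s * w (norm x)"
    using L(1)
  proof (induction L)
    case Nil show ?case by (intro exI[of _ 0]) (simp add: sumT_def)
  next
    case (Cons t L)
    obtain a i j v where t: "t = (a, i, j, v)" by (cases t) auto
    have At: "SymA w 0 (s - real i - real j) a" using Cons.prems t by auto
    obtain C1 where C1: "\<And>x::real^2. x \<noteq> 0 \<Longrightarrow> norm (Tm (a, i, j, v) x) \<le> C1 * norm x powr s * w (norm x)"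
      using term_bound[OF At, of "axis 1 1" v] by (auto simp: axis_eq_0_iff)
    obtain C2 where C2: "\<forall>x::real^2. x \<noteq> 0 \<longrightarrow> norm (sumT L x) \<le> C2 * norm x powr s * w (norm x)"
      using Cons.IH Cons.prems by auto
    have "norm (sumT (t # L) x) \<le> (C1 + C2) * norm x powr s * w (norm x)" if x: "x \<noteq> 0" for x :: "real^2"
    proof -
      have "norm (sumT (t # L) x) \<le> norm (Tm t x) + norm (sumT L x)" unfolding sumT_Cons by (rule norm_triangle_ineq)
      also have "\<dots> \<le> C1 * norm x powr s * w (norm x) + C2 * norm x powr s * w (norm x)"
        using C1[OF x] C2 x t by (intro add_mono) auto
      also have "\<dots> = (C1 + C2) * norm x powr s * w (norm x)" by (simp add: distrib_right)
      finally show ?thesis .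
    qed
    thus ?case by blast
  qed
  then obtain C where "\<forall>x::real^2. x \<noteq> 0 \<longrightarrow> norm (sumT L x) \<le> C * norm x powr s * w (norm x)" by blast
  thus ?thesis using L(2) by (intro exI[of _ C]) auto
qed


lemma Good_pd:
  assumes "Good w N s F"
  shows "length ds \<le> N \<Longrightarrow> Good w (N - length ds) (s - real (length ds)) (pd ds F)"
proof (induction ds)
  case Nil thus ?case using assms by simp
next
  case (Cons k ds)
  have "length ds \<le> N" using Cons.prems by simp
  hence G: "Good w (Suc (N - length (k # ds))) (s - real (length ds)) (pd ds F)"
    using Cons.IH Cons.prems by (simp add: Suc_diff_Suc)
  have "Good w (N - length (k # ds)) (s - real (length ds) - 1) (\<lambda>x. frechet_derivative (pd ds F) (at x) (axis k 1))"
    by (rule Good_deriv(2)[OF G])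
  thus ?case by (simp add: algebra_simps)
qed

lemma Good_pd_diff:
  assumes "Good w N s F" "length ds < N" "x \<noteq> 0"
  shows "pd ds F differentiable (at x)"
proof -
  have "Good w (N - length ds) (s - real (length ds)) (pd ds F)" using Good_pd[OF assms(1)] assms(2) by simp
  moreover have "N - length ds = Suc (N - Suc (length ds))" using assms(2) by simp
  ultimately have "Good w (Suc (N - Suc (length ds))) (s - real (length ds)) (pd ds F)" by simp
  thus ?thesis using Good_deriv(1) assms(3) by blast
qed

lemma Good_base: "Good w N s F \<Longrightarrow> Good w 0 s F"
proof -
  assume "Good w N s F"
  then obtain L where L: "\<forall>t\<in>set L. case t of (a, i, j, v) \<Rightarrow> SymA w N (s - real i - real j) a"
    "\<forall>x. x \<noteq> 0 \<longrightarrow> F x = sumT L x" unfolding Good_def by blast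
  have "\<forall>t\<in>set L. case t of (a, i, j, v) \<Rightarrow> SymA w 0 (s - real i - real j) a"
  proof
    fix t assume "t \<in> set L"
    moreover obtain a i j v where "t = (a, i, j, v)" by (cases t) auto
    ultimately show "case t of (a, i, j, v) \<Rightarrow> SymA w 0 (s - real i - real j) a"
      using L(1) SymA_base by fastforce
  qed
  thus ?thesis unfolding Good_def using L(2) by blast
qed

lemma Kker_sum:
  "(Kker m x) = sumT [(\<lambda>\<rho>. Gfun m \<rho> / \<rho>^2, 0, 1, axis 1 1), (\<lambda>\<rho>. Gfun m \<rho> / \<rho>^2, 1, 0, - axis 2 1)] x"
proof -
  have "(Kker m x) $ i = (sumT [(\<lambda>\<rho>. Gfun m \<rho> / \<rho>^2, 0, 1, axis 1 1), (\<lambda>\<rho>. Gfun m \<rho> / \<rho>^2, 1, 0, - axis 2 1)] x) $ i" for i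
    using exhaust_2[of i] by (auto simp: Kker_def perp_def sumT_def Tm_def axis_def)
  thus ?thesis by (simp add: vec_eq_iff)
qed

theorem corollary2p4:
  fixes m :: "real \<Rightarrow> real" and n :: nat
  assumes "n \<ge> 1" and "H1 n m" and "H2a m"
  shows "\<exists>C>0. \<forall>x::real^2. x \<noteq> 0 \<longrightarrow>
           (\<forall>ds. length ds \<le> n \<longrightarrow> pd ds (Kker m) differentiable (at x)) \<and>
           (\<forall>ds. length ds \<le> n + 1 \<longrightarrow>
              norm (pd ds (Kker m) x)
                \<le> C * norm x powr (- real (length ds + 1)) * (m (1 / norm x) + 1))"
proof -
  obtain m0 A B where K: "kset m (deriv m) m0 A B" using kset_inst[OF assms(2,3)] by blast
  interpret kset m "deriv m" m0 A B by (rule K)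
  define w where "w \<rho> = m (1 / \<rho>) + 1" for \<rho>
  have w1: "\<And>\<rho>. \<rho> > 0 \<Longrightarrow> w \<rho> \<ge> 1" using m_pos by (simp add: w_def less_imp_le)
  have P: "Psi (deriv m) (n + 3) (deriv m)" by (rule H1_Psi[OF assms(2)])
  have P2: "Psi (deriv m) (Suc (n + 1)) (deriv m)" by (rule Psi_mono_le[OF _ P]) simp
  have P0: "Psi (deriv m) 0 (deriv m)" by (rule Psi_mono_le[OF _ P]) simp
  have IS: "SymA w (n + 1) 0 (Iop (deriv m))" using I_Sym[OF P2] unfolding w_def .
  have Gs: "SymA w (n + 1) 0 (Gfun m)"
  proof -
    have "SymA w (n + 1) 0 (\<lambda>\<rho>. m0plus m / (2 * pi) + 1 / (2 * pi) * Iop (deriv m) \<rho>)"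
      by (intro SymA_add SymA_const SymA_cmult IS w1)
    thus ?thesis
    proof (rule SymA_cong)
      fix \<rho> :: real assume r: "\<rho> > 0"
      have "Iop (deriv m) \<rho> = integral {0<..} (\<lambda>r. bessel_J0 (\<rho> * r) * deriv m r)"
        unfolding Iop_def by (rule set_borel_integral_eq_integral(2)[OF J0psi_int[OF P0 r]])
      thus "m0plus m / (2 * pi) + 1 / (2 * pi) * Iop (deriv m) \<rho> = Gfun m \<rho>" by (simp add: Gfun_def)
    qed
  qed
  have Hs: "SymA w (n + 1) (-2) (\<lambda>\<rho>. Gfun m \<rho> / \<rho>^2)"
  proof -
    have "SymA w (n + 1) (0 + -2) (\<lambda>\<rho>. \<rho> powr (-2) * Gfun m \<rho>)" by (rule SymA_powr[OF Gs])
    hence "SymA w (n + 1) (-2) (\<lambda>\<rho>. \<rho> powr (-2) * Gfun m \<rho>)" by simp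
    thus ?thesis
    proof (rule SymA_cong)
      fix \<rho> :: real assume r: "\<rho> > 0"
      have "\<rho> powr (-2) = 1 / \<rho>^2" using r by (simp add: powr_minus powr_realpow divide_inverse)
      thus "\<rho> powr (-2) * Gfun m \<rho> = Gfun m \<rho> / \<rho>^2" by simp
    qed
  qed
  have GK: "Good w (n + 1) (-1) (Kker m)"
    unfolding Good_def
    by (intro exI[of _ "[(\<lambda>\<rho>. Gfun m \<rho> / \<rho>^2, 0, 1, axis 1 1), (\<lambda>\<rho>. Gfun m \<rho> / \<rho>^2, 1, 0, - axis 2 1)]"] conjI)
       (use Hs Kker_sum in auto)
  define DS where "DS = {ds :: 2 list. set ds \<subseteq> UNIV \<and> length ds \<le> n + 1}"
  have fDS: "finite DS" unfolding DS_def by (rule finite_lists_length_le) simp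
  have "\<forall>ds\<in>DS. \<exists>C. \<forall>x::real^2. x \<noteq> 0 \<longrightarrow> norm (pd ds (Kker m) x) \<le> C * norm x powr (- real (length ds + 1)) * w (norm x)"
  proof
    fix ds assume "ds \<in> DS"
    hence l: "length ds \<le> n + 1" by (simp add: DS_def)
    have "Good w (n + 1 - length ds) (-1 - real (length ds)) (pd ds (Kker m))" by (rule Good_pd[OF GK l])
    from Good_bound[OF Good_base[OF this]]
    show "\<exists>C. \<forall>x::real^2. x \<noteq> 0 \<longrightarrow> norm (pd ds (Kker m) x) \<le> C * norm x powr (- real (length ds + 1)) * w (norm x)"
      by (simp add: algebra_simps)
  qed
  then obtain Cf where Cf: "\<And>ds x. ds \<in> DS \<Longrightarrow> x \<noteq> 0 \<Longrightarrow> norm (pd ds (Kker m) x) \<le> Cf ds * norm x powr (- real (length ds + 1)) * w (norm x)"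
    by metis
  define C where "C = 1 + (\<Sum>ds\<in>DS. \<bar>Cf ds\<bar>)"
  have Cp: "C > 0" unfolding C_def by (smt (verit) sum_nonneg abs_ge_zero)
  have CC: "Cf ds \<le> C" if "ds \<in> DS" for ds
  proof -
    have "\<bar>Cf ds\<bar> \<le> (\<Sum>ds\<in>DS. \<bar>Cf ds\<bar>)" by (rule member_le_sum[OF that _ fDS]) simp
    thus ?thesis unfolding C_def by linarith
  qed
  have "\<forall>x::real^2. x \<noteq> 0 \<longrightarrow>
           (\<forall>ds. length ds \<le> n \<longrightarrow> pd ds (Kker m) differentiable (at x)) \<and>
           (\<forall>ds. length ds \<le> n + 1 \<longrightarrow>
              norm (pd ds (Kker m) x) \<le> C * norm x powr (- real (length ds + 1)) * (m (1 / norm x) + 1))"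
  proof (intro allI impI conjI)
    fix x :: "real^2" and ds :: "2 list"
    assume x: "x \<noteq> 0"
    { assume "length ds \<le> n"
      hence "length ds < n + 1" by simp
      thus "pd ds (Kker m) differentiable (at x)" by (rule Good_pd_diff[OF GK _ x]) }
    { assume l: "length ds \<le> n + 1"
      hence ds: "ds \<in> DS" by (simp add: DS_def)
      have "norm (pd ds (Kker m) x) \<le> Cf ds * norm x powr (- real (length ds + 1)) * w (norm x)" by (rule Cf[OF ds x])
      also have "\<dots> \<le> C * norm x powr (- real (length ds + 1)) * w (norm x)"
        using CC[OF ds] w1[of "norm x"] x by (intro mult_right_mono) auto
      finally show "norm (pd ds (Kker m) x) \<le> C * norm x powr (- real (length ds + 1)) * (m (1 / norm x) + 1)"
        by (simp add: w_def) }
  qed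
  thus ?thesis using Cp by blast
qed

end
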